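(* Let $K$ be a positive integer and $\gamma_0,\dots,\gamma_K$ real numbers with $\gamma_0=1$, $\gamma_K\ne0$. Let $\hat{\mathcal H}_n(x)=H_n(x)/(2^nn!)$ for $n\ge0$, $\hat{\mathcal H}_n=0$ for $n<0$, and $q_n(x)=\sum_{j=0}^K\gamma_j\hat{\mathcal H}_{n-j}(x)$ for $n\ge0$. Assume all the zeros of $P(x)=\sum_{j=0}^K\gamma_jx^{K-j}$ are real, and that $N^-$ of them are negative (with multiplicity). Then for $n$ large enough: if $n-K$ is even, $q_n$ has exactly $(n-K)/2+N^-$ negative zeros and exactly $(n-K)/2+K-N^-$ positive zeros; if $n-K$ is odd, $q_n$ has at least $(n-K-1)/2+N^-$ negative zeros and at least $(n-K-1)/2+K-N^-$ positive zeros.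
   Context: $H_n$ denotes the standard (physicists') Hermite polynomial of degree $n$ (orthogonal with respect to $e^{-x^2}$, leading coefficient $2^n$). *)

theory Defs
  imports "HOL-Computational_Algebra.Polynomial" Complex_Main
begin

fun hermite :: "nat \<Rightarrow> real poly" where
  "hermite 0 = 1"
| "hermite (Suc 0) = [:0, 2:]"
| "hermite (Suc (Suc n)) = [:0, 2:] * hermite (Suc n) - smult (2 * real (Suc n)) (hermite n)"

definition hermite_hat :: "int \<Rightarrow> real poly" where
  "hermite_hat m = (if m < 0 then 0
     else smult (1 / (2 ^ nat m * fact (nat m))) (hermite (nat m)))"

definition q_poly :: "nat \<Rightarrow> (nat \<Rightarrow> real) \<Rightarrow> nat \<Rightarrow> real poly" where
  "q_poly K \<gamma> n = (\<Sum>j=0..K. smult (\<gamma> j) (hermite_hat (int n - int j)))"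

definition P_poly :: "nat \<Rightarrow> (nat \<Rightarrow> real) \<Rightarrow> real poly" where
  "P_poly K \<gamma> = (\<Sum>j=0..K. monom (\<gamma> j) (K - j))"

end

theory Submission
  imports Defs "HOL-Computational_Algebra.Fundamental_Theorem_Algebra"
begin


lemma hermite_SS: "hermite (Suc (Suc n)) = [:0, 2:] * hermite (Suc n) - smult (2 * real (Suc n)) (hermite n)"
  by simp

lemma hermite_pderiv: "pderiv (hermite (Suc n)) = smult (2 * real (Suc n)) (hermite n)"
proof (induction n rule: nat_less_induct)
  case (1 n)
  show ?case
  proof (cases n)
    case 0
    then show ?thesis by (simp add: pderiv_pCons)
  next
    case (Suc k)
    note IH = 1[rule_format]
    show ?thesis
    proof (cases k)
      case 0
      with Suc show ?thesis
        by (simp add: pderiv_pCons pderiv_mult pderiv_diff pderiv_smult algebra_simps smult_add_left) 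
    next
      case (Suc j)
      have e1: "pderiv (hermite (Suc k)) = smult (2 * real (Suc k)) (hermite k)" using IH[of k] \<open>n = Suc k\<close> by simp
      have e2: "pderiv (hermite (Suc j)) = smult (2 * real (Suc j)) (hermite j)" using IH[of j] \<open>n = Suc k\<close> Suc by simp
      have hk: "hermite (Suc k) = [:0, 2:] * hermite k - smult (2 * real (Suc j)) (hermite j)"
        using Suc by simp
      have "pderiv (hermite (Suc n)) = pderiv ([:0, 2:] * hermite (Suc k) - smult (2 * real (Suc k)) (hermite k))"
        using \<open>n = Suc k\<close> by simp
      also have "\<dots> = smult 2 (hermite (Suc k)) + [:0,2:] * smult (2 * real (Suc k)) (hermite k)
           - smult (2 * real (Suc k)) (pderiv (hermite k))"
        using e1 by (simp add: pderiv_mult pderiv_diff pderiv_smult pderiv_pCons)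
      also have "pderiv (hermite k) = smult (2 * real (Suc j)) (hermite j)" using e2 Suc by simp
      also have "smult 2 (hermite (Suc k)) + [:0,2:] * smult (2 * real (Suc k)) (hermite k)
           - smult (2 * real (Suc k)) (smult (2 * real (Suc j)) (hermite j))
          = smult 2 (hermite (Suc k)) + smult (2 * real (Suc k)) ([:0, 2:] * hermite k - smult (2 * real (Suc j)) (hermite j))"
        by (simp add: algebra_simps smult_diff_right)
      also have "\<dots> = smult (2 * real (Suc n)) (hermite n)"
        unfolding hk[symmetric] using \<open>n = Suc k\<close> by (simp add: algebra_simps smult_add_left numeral_poly)
      finally show ?thesis .
    qed
  qed
qed

lemma hermite_rec: "hermite (Suc n) = [:0, 2:] * hermite n - pderiv (hermite n)"
proof (cases n)
  case 0 then show ?thesis by simp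
next
  case (Suc k) then show ?thesis by (simp add: hermite_pderiv del: hermite.simps) (simp)
qed

lemma hermite_deg_lc: "degree (hermite n) = n \<and> lead_coeff (hermite n) = 2 ^ n"
proof (induction n rule: nat_less_induct)
  case (1 n)
  show ?case
  proof (cases n)
    case 0 then show ?thesis by simp
  next
    case (Suc k)
    show ?thesis
    proof (cases k)
      case 0 with Suc show ?thesis by simp
    next
      case (Suc j)
      have a: "degree (hermite k) = k" "lead_coeff (hermite k) = 2^k" using 1 \<open>n = Suc k\<close> by auto
      have b: "degree (hermite j) = j" using 1 \<open>n = Suc k\<close> Suc by auto
      have hk0: "hermite k \<noteq> 0" using a by auto
      have d1: "degree ([:0, 2:] * hermite k) = Suc k" using a hk0 by (simp add: degree_mult_eq)
      have d2: "degree (smult (2 * real (Suc j)) (hermite j)) < Suc k" using b Suc by simp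
      have "hermite n = [:0, 2:] * hermite k - smult (2 * real (Suc j)) (hermite j)"
        using \<open>n = Suc k\<close> Suc by simp
      moreover have "degree ([:0, 2:] * hermite k - smult (2 * real (Suc j)) (hermite j)) = Suc k"
        using d1 d2 by (metis degree_add_eq_left degree_minus diff_conv_add_uminus)
      moreover have "coeff ([:0, 2:] * hermite k - smult (2 * real (Suc j)) (hermite j)) (Suc k) = 2 ^ Suc k"
        using d2 a by (simp add: coeff_eq_0)
      ultimately show ?thesis using \<open>n = Suc k\<close> by simp
    qed
  qed
qed

lemma hermite_parity: "poly (hermite n) (-x) = (-1)^n * poly (hermite n) x"
proof (induction n rule: nat_less_induct)
  case (1 n)
  show ?case
  proof (cases n)
    case 0 then show ?thesis by simp
  next
    case (Suc k)
    show ?thesis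
    proof (cases k)
      case 0 with Suc show ?thesis by simp
    next
      case (Suc j)
      have a: "poly (hermite k) (-x) = (-1)^k * poly (hermite k) x" using 1 \<open>n = Suc k\<close> by auto
      have b: "poly (hermite j) (-x) = (-1)^j * poly (hermite j) x" using 1 \<open>n = Suc k\<close> Suc by auto
      show ?thesis using a b \<open>n = Suc k\<close> Suc by (simp add: algebra_simps)
    qed
  qed
qed

lemma hermite_zero: "poly (hermite (2*p)) 0 = (-1)^p * fact (2*p) / fact p \<and> poly (hermite (Suc (2*p))) 0 = 0"
proof (induction p)
  case 0 then show ?case by simp
next
  case (Suc p)
  have e: "2 * Suc p = Suc (Suc (2*p))" by simp
  have f: "fact (Suc (Suc (2*p))) = (real (Suc (2*p)) * 2 * real (Suc p)) * fact (2*p)"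
    by (simp add: algebra_simps)
  have g: "fact (Suc p) = real (Suc p) * fact p" by simp
  have h: "poly (hermite (2*p)) 0 = (-1)^p * fact (2*p) / fact p" using Suc by simp
  have h2: "poly (hermite (2 * Suc p)) 0 = - (2 * real (Suc (2*p))) * poly (hermite (2*p)) 0"
    unfolding e by (simp add: algebra_simps)
  have h3: "poly (hermite (Suc (2 * Suc p))) 0 = - (2 * real (Suc (Suc (2*p)))) * poly (hermite (Suc (2*p))) 0"
    unfolding e by (simp add: algebra_simps)
  have "poly (hermite (2 * Suc p)) 0 = (-1)^Suc p * fact (2 * Suc p) / fact (Suc p)"
    unfolding h2 h unfolding e f g by (simp add: field_simps del: fact_Suc of_nat_Suc)
  then show ?case using h3 Suc by simp
qed

definition hh :: "nat \<Rightarrow> real poly" where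
  "hh m = smult (1 / (2 ^ m * fact m)) (hermite m)"

lemma hermite_hat_nat: "hermite_hat (int m) = hh m"
  by (simp add: hermite_hat_def hh_def)

lemma hh_pderiv: "pderiv (hh (Suc m)) = hh m"
proof -
  have c: "(2 * real (Suc m)) / (2 ^ Suc m * fact (Suc m)) = 1 / (2 ^ m * fact m)"
    by (simp add: field_simps del: of_nat_Suc)
  show ?thesis using c by (simp add: hh_def pderiv_smult hermite_pderiv del: hermite.simps of_nat_Suc fact_Suc power_Suc)
qed

lemma hh_deg: "degree (hh m) = m" and hh_lc: "lead_coeff (hh m) = 1 / fact m"
  using hermite_deg_lc[of m] by (auto simp: hh_def)

lemma hh_nz: "hh m \<noteq> 0"
  using hh_lc[of m] by auto

lemma hh_parity: "poly (hh n) (-x) = (-1)^n * poly (hh n) x"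
  by (simp add: hh_def hermite_parity)

lemma hh_zero_even: "poly (hh (2*p)) 0 = (-1)^p / (4^p * fact p)"
proof -
  have "poly (hh (2*p)) 0 = (1 / (2 ^ (2*p) * fact (2*p))) * ((-1)^p * fact (2*p) / fact p)"
    using hermite_zero[of p] by (simp add: hh_def)
  also have "(2::real) ^ (2*p) = 4 ^ p" by (simp add: power_mult)
  finally show ?thesis by simp
qed

lemma hh_zero_odd: "poly (hh (Suc (2*p))) 0 = 0"
  using hermite_zero[of p] by (simp add: hh_def)



lemma prod_lin_dvd:
  fixes f :: "real poly"
  assumes "finite S" "\<forall>z\<in>S. poly f z = 0"
  shows "(\<Prod>z\<in>S. [:-z,1:]) dvd f"
  using assms
proof (induction S arbitrary: f rule: finite_induct)
  case empty then show ?case by simp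
next
  case (insert z S)
  have "[:-z,1:] dvd f" using insert.prems poly_eq_0_iff_dvd by blast
  then obtain f1 where f1: "f = [:-z,1:] * f1" by (auto elim: dvdE)
  have "\<forall>w\<in>S. poly f1 w = 0"
  proof
    fix w assume "w \<in> S"
    then have "w \<noteq> z" "poly f w = 0" using insert by auto
    then show "poly f1 w = 0" using f1 by simp
  qed
  then have "(\<Prod>z\<in>S. [:-z,1:]) dvd f1" using insert.IH by blast
  then have "[:-z,1:] * (\<Prod>z\<in>S. [:-z,1:]) dvd [:-z,1:] * f1" by (rule mult_dvd_mono[OF dvd_refl])
  then have "[:-z,1:] * (\<Prod>z\<in>S. [:-z,1:]) dvd f" using f1 by simp
  then show ?case by (simp only: prod.insert[OF insert.hyps])
qed

lemma real_rooted_factor: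
  fixes f :: "real poly"
  assumes "f \<noteq> 0" "card {x. poly f x = 0} = degree f"
  shows "f = smult (lead_coeff f) (\<Prod>z\<in>{x. poly f x = 0}. [:-z,1:])"
proof -
  define S where "S = {x. poly f x = 0}"
  have fin: "finite S" using poly_roots_finite[OF assms(1)] by (simp add: S_def)
  define Q where "Q = (\<Prod>z\<in>S. [:-z,1:])"
  have Qd: "Q dvd f" unfolding Q_def using prod_lin_dvd[OF fin] by (simp add: S_def)
  then obtain k where k: "f = Q * k" by (auto elim: dvdE)
  have Q0: "Q \<noteq> 0" unfolding Q_def using fin by auto
  have degQ: "degree Q = card S" unfolding Q_def
    by (subst degree_prod_sum_eq) auto
  have lcQ: "lead_coeff Q = 1" unfolding Q_def by (simp add: lead_coeff_prod)
  have k0: "k \<noteq> 0" using k assms(1) by auto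
  have "degree f = degree Q + degree k" using k Q0 k0 by (simp add: degree_mult_eq)
  then have "degree k = 0" using degQ assms(2) by (simp add: S_def)
  then obtain c where c: "k = [:c:]" by (meson degree_eq_zeroE)
  then have "f = smult c Q" using k by simp
  moreover have "lead_coeff f = c" using k c lcQ by (simp add: lead_coeff_mult)
  ultimately show ?thesis by (simp add: Q_def S_def)
qed

lemma sgn_prod_lin:
  fixes a :: real
  assumes "finite S" "a \<notin> S"
  shows "sgn (\<Prod>z\<in>S. a - z) = (-1)^card {z\<in>S. a < z}"
  using assms
proof (induction S rule: finite_induct)
  case empty then show ?case by simp
next
  case (insert z S)
  have e: "{w \<in> insert z S. a < w} = (if a < z then insert z {w\<in>S. a < w} else {w\<in>S. a < w})"
    by auto
  have "z \<noteq> a" using insert by auto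
  show ?case using insert e \<open>z \<noteq> a\<close>
    by (auto simp: sgn_mult card_insert_if)
qed

lemma sgn_at:
  fixes f :: "real poly"
  assumes "f \<noteq> 0" "card {x. poly f x = 0} = degree f" "poly f a \<noteq> 0"
  shows "sgn (poly f a) = sgn (lead_coeff f) * (-1)^card {z. poly f z = 0 \<and> a < z}"
proof -
  have fin: "finite {x. poly f x = 0}" using poly_roots_finite[OF assms(1)] .
  have "poly f a = lead_coeff f * (\<Prod>z\<in>{x. poly f x = 0}. a - z)"
    by (subst real_rooted_factor[OF assms(1,2)]) (simp add: poly_prod)
  then show ?thesis using sgn_prod_lin[OF fin, of a] assms(3) by (simp add: sgn_mult)
qed

lemma sgn_der:
  fixes f :: "real poly"
  assumes "f \<noteq> 0" "card {x. poly f x = 0} = degree f" "poly f x = 0"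
  shows "sgn (poly (pderiv f) x) = sgn (lead_coeff f) * (-1)^card {z. poly f z = 0 \<and> x < z}"
proof -
  define S where "S = {x. poly f x = 0}"
  have fin: "finite S" using poly_roots_finite[OF assms(1)] by (simp add: S_def)
  have xS: "x \<in> S" using assms(3) by (simp add: S_def)
  have SS: "S = insert x (S - {x})" using xS by auto
  have "f = smult (lead_coeff f) (\<Prod>z\<in>S. [:-z,1:])" using real_rooted_factor[OF assms(1,2)] by (simp add: S_def)
  also have "(\<Prod>z\<in>S. [:-z,1:]) = [:-x,1:] * (\<Prod>z\<in>S-{x}. [:-z,1:])"
    by (rule prod.remove[OF fin xS])
  finally have ff: "f = smult (lead_coeff f) ([:-x,1:] * (\<Prod>z\<in>S-{x}. [:-z,1:]))" .
  have "poly (pderiv f) x = lead_coeff f * poly (\<Prod>z\<in>S-{x}. [:-z,1:]) x"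
    by (subst ff) (simp add: pderiv_smult pderiv_mult pderiv_pCons del: mult_pCons_left)
  then have "poly (pderiv f) x = lead_coeff f * (\<Prod>z\<in>S-{x}. x - z)"
    by (simp add: poly_prod)
  moreover have "sgn (\<Prod>z\<in>S-{x}. x - z) = (-1)^card {z\<in>S-{x}. x < z}"
    using sgn_prod_lin[of "S - {x}" x] fin by simp
  moreover have "{z\<in>S-{x}. x < z} = {z. poly f z = 0 \<and> x < z}" by (auto simp: S_def)
  ultimately show ?thesis by (simp add: sgn_mult)
qed



lemma poly_sgn_pinf:
  fixes p :: "real poly"
  assumes "p \<noteq> 0"
  shows "\<exists>T. \<forall>x\<ge>T. sgn (poly p x) = sgn (lead_coeff p)"
proof (cases "lead_coeff p > 0")
  case True
  then obtain T where "\<forall>x\<ge>T. poly p x \<ge> lead_coeff p" using poly_pinfty_gt_lc by blast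
  then show ?thesis using True by (intro exI[of _ T]) auto
next
  case False
  then have lc: "lead_coeff (-p) > 0" using assms by (simp add: less_le)
  then obtain T where "\<forall>x\<ge>T. poly (-p) x \<ge> lead_coeff (-p)" using poly_pinfty_gt_lc by blast
  then show ?thesis using lc by (intro exI[of _ T]) auto
qed

lemma poly_sgn_minf:
  fixes p :: "real poly"
  assumes "p \<noteq> 0"
  shows "\<exists>T. \<forall>x\<le>T. sgn (poly p x) = (-1)^degree p * sgn (lead_coeff p)"
proof -
  define q where "q = pcompose p [:0,-1:]"
  have lq: "lead_coeff q = lead_coeff p * (-1)^degree p"
    unfolding q_def by (subst lead_coeff_comp) auto
  have q0: "q \<noteq> 0" using lq assms by auto
  obtain T where T: "\<forall>x\<ge>T. sgn (poly q x) = sgn (lead_coeff q)" using poly_sgn_pinf[OF q0] by blast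
  have "sgn (poly p x) = (-1)^degree p * sgn (lead_coeff p)" if "x \<le> -T" for x
  proof -
    have "sgn (poly q (-x)) = sgn (lead_coeff q)" using T that by auto
    moreover have "poly q (-x) = poly p x" by (simp add: q_def poly_pcompose)
    ultimately show ?thesis using lq by (simp add: sgn_mult mult.commute)
  qed
  then show ?thesis by blast
qed

lemma cnt_add:
  fixes g :: "real poly"
  assumes "g \<noteq> 0" "u \<le> v" "v \<le> w"
  shows "card {x. u < x \<and> x < v \<and> poly g x = 0} + card {x. v < x \<and> x < w \<and> poly g x = 0}
         \<le> card {x. u < x \<and> x < w \<and> poly g x = 0}"
proof -
  have fin: "finite {x. u < x \<and> x < w \<and> poly g x = 0}"
    by (rule finite_subset[OF _ poly_roots_finite[OF assms(1)]]) auto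
  have "card {x. u < x \<and> x < v \<and> poly g x = 0} + card {x. v < x \<and> x < w \<and> poly g x = 0}
      = card ({x. u < x \<and> x < v \<and> poly g x = 0} \<union> {x. v < x \<and> x < w \<and> poly g x = 0})"
    by (rule card_Un_disjoint[symmetric])
       (auto intro: finite_subset[OF _ poly_roots_finite[OF assms(1)]])
  also have "\<dots> \<le> card {x. u < x \<and> x < w \<and> poly g x = 0}"
    by (rule card_mono[OF fin]) (use assms in auto)
  finally show ?thesis .
qed

lemma cnt_ivt:
  fixes g :: "real poly"
  assumes "g \<noteq> 0" "u < v" "poly g u * poly g v < 0"
  shows "1 \<le> card {x. u < x \<and> x < v \<and> poly g x = 0}"
proof -
  obtain x where "u < x" "x < v" "poly g x = 0" using poly_IVT[OF assms(2,3)] by auto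
  moreover have "finite {x. u < x \<and> x < v \<and> poly g x = 0}"
    by (rule finite_subset[OF _ poly_roots_finite[OF assms(1)]]) auto
  ultimately show ?thesis by (metis (mono_tags, lifting) One_nat_def Suc_leI card_gt_0_iff empty_iff mem_Collect_eq)
qed

lemma cnt_chain:
  fixes g :: "real poly" and A :: "real set"
  assumes "g \<noteq> 0" "finite A" "A \<noteq> {}"
    and "\<forall>x\<in>A. \<forall>y\<in>A. x < y \<and> (\<forall>z\<in>A. \<not> (x < z \<and> z < y)) \<longrightarrow> poly g x * poly g y < 0"
  shows "card A - 1 \<le> card {x. Min A < x \<and> x < Max A \<and> poly g x = 0}"
proof -
  obtain n where "card A = n" by blast
  then show ?thesis using assms(2-4)
  proof (induction n arbitrary: A)
    case 0 then show ?case by simp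
  next
    case (Suc n)
    show ?case
    proof (cases "n = 0")
      case True then show ?thesis using Suc by simp
    next
      case False
      define M where "M = Max A"
      define B where "B = A - {M}"
      have MA: "M \<in> A" unfolding M_def using Suc.prems by simp
      have cB: "card B = n" using Suc.prems MA by (simp add: B_def)
      have fB: "finite B" using Suc.prems by (simp add: B_def)
      have neB: "B \<noteq> {}" using cB False by auto
      have BM: "\<forall>z\<in>B. z < M"
        unfolding B_def M_def using Suc.prems by (metis DiffE Max_ge insertI1 order_le_less)
      have consB: "\<forall>x\<in>B. \<forall>y\<in>B. x < y \<and> (\<forall>z\<in>B. \<not> (x < z \<and> z < y)) \<longrightarrow> poly g x * poly g y < 0"
      proof (intro ballI impI)
        fix x y assume xy: "x \<in> B" "y \<in> B" "x < y \<and> (\<forall>z\<in>B. \<not> (x < z \<and> z < y))"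
        have "\<forall>z\<in>A. \<not> (x < z \<and> z < y)"
        proof
          fix z assume "z \<in> A"
          show "\<not> (x < z \<and> z < y)"
          proof (cases "z = M")
            case True then show ?thesis using BM xy by auto
          next
            case False then show ?thesis using xy \<open>z \<in> A\<close> by (auto simp: B_def)
          qed
        qed
        then show "poly g x * poly g y < 0" using Suc.prems(4) xy by (auto simp: B_def)
      qed
      have IH: "card B - 1 \<le> card {x. Min B < x \<and> x < Max B \<and> poly g x = 0}"
        using Suc.IH[OF cB fB neB consB] .
      have MBin: "Max B \<in> B" using fB neB by simp
      have MBM: "Max B < M" using BM MBin by auto
      have "\<forall>z\<in>A. \<not> (Max B < z \<and> z < M)"
      proof
        fix z assume "z \<in> A"
        show "\<not> (Max B < z \<and> z < M)"
        proof (cases "z = M")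
          case True then show ?thesis by auto
        next
          case False then have "z \<in> B" using \<open>z \<in> A\<close> by (simp add: B_def)
          then show ?thesis using fB by (meson Max_ge not_less)
        qed
      qed
      then have "poly g (Max B) * poly g M < 0" using Suc.prems(4) MBin MA MBM by (auto simp: B_def)
      then have one: "1 \<le> card {x. Max B < x \<and> x < M \<and> poly g x = 0}"
        using cnt_ivt[OF assms(1) MBM] by simp
      have minAB: "Min A = Min B"
      proof -
        have "A = insert M B" using MA by (auto simp: B_def)
        then have "Min A = min M (Min B)" using fB neB by simp
        moreover have "Min B \<le> M" using BM fB neB by (meson Min_in less_imp_le)
        ultimately show ?thesis by simp
      qed
      have "card {x. Min B < x \<and> x < Max B \<and> poly g x = 0} + card {x. Max B < x \<and> x < M \<and> poly g x = 0}
            \<le> card {x. Min B < x \<and> x < M \<and> poly g x = 0}"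
        by (rule cnt_add[OF assms(1)]) (use fB neB MBM in auto)
      then show ?thesis using IH one minAB cB Suc.prems(1) by (simp add: M_def)
    qed
  qed
qed



definition RR :: "real poly \<Rightarrow> bool" where
  "RR f \<longleftrightarrow> f \<noteq> 0 \<and> card {x. poly f x = 0} = degree f"

lemma sgn_prod_neg: "sgn (x::real) * sgn y = -1 \<Longrightarrow> x * y < 0"
proof -
  assume h: "sgn x * sgn y = -1"
  have "sgn (x * y) = -1" using h by (simp add: sgn_mult)
  then show ?thesis by (metis sgn_less neg_less_0_iff_less zero_less_one)
qed

lemma sgn_sq: "(x::real) \<noteq> 0 \<Longrightarrow> sgn x * sgn x = 1"
  by (simp add: sgn_if)

lemma split_count:
  fixes g :: "real poly"
  assumes "g \<noteq> 0" "card {x. poly g x = 0} \<le> n"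
    "L1 \<le> card {x. x < a \<and> poly g x = 0}" "L2 \<le> card {x. a < x \<and> poly g x = 0}"
    "n \<le> L1 + L2 + (if poly g a = 0 then 1 else 0)"
  shows "card {x. x < a \<and> poly g x = 0} = L1 \<and> card {x. poly g x = 0} = n
         \<and> card {x. a < x \<and> poly g x = 0} = L2"
proof -
  have fin: "finite {x. poly g x = 0}" using poly_roots_finite[OF assms(1)] .
  have f1: "finite {x. x < a \<and> poly g x = 0}" by (rule finite_subset[OF _ fin]) auto
  have f2: "finite {x. a < x \<and> poly g x = 0}" by (rule finite_subset[OF _ fin]) auto
  have e: "{x. poly g x = 0} = ({x. x < a \<and> poly g x = 0} \<union> {x. a < x \<and> poly g x = 0}) \<union> {x. x = a \<and> poly g x = 0}"
    by auto
  have "{x. x = a \<and> poly g x = 0} = (if poly g a = 0 then {a} else {})" by auto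
  then have c3: "card {x. x = a \<and> poly g x = 0} = (if poly g a = 0 then 1 else 0)" by simp
  have "card {x. poly g x = 0} = card {x. x < a \<and> poly g x = 0} + card {x. a < x \<and> poly g x = 0} + (if poly g a = 0 then 1 else 0)"
    apply (subst e)
    apply (subst card_Un_disjoint)
       apply (use f1 f2 in auto)[3]
    apply (subst card_Un_disjoint)
    using f1 f2 c3 by auto
  then show ?thesis using assms by linarith
qed

lemma card_roots_mono:
  fixes g :: "real poly"
  assumes "g \<noteq> 0" "\<And>x. P x \<Longrightarrow> Q x"
  shows "card {x. P x \<and> poly g x = 0} \<le> card {x. Q x \<and> poly g x = 0}"
  by (rule card_mono[OF finite_subset[OF _ poly_roots_finite[OF assms(1)]]]) (use assms(2) in auto)

context
  fixes f g :: "real poly" and r :: real and n :: nat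
  assumes RRf: "RR f" and degf: "degree f = n" and n1: "1 \<le> n" and r0: "r \<noteq> 0"
    and g_def: "g = f - smult r (pderiv f)"
begin

lemma f0: "f \<noteq> 0" using RRf by (simp add: RR_def)
lemma cardS: "card {x. poly f x = 0} = n" using RRf degf by (simp add: RR_def)
lemma finS: "finite {x. poly f x = 0}" using poly_roots_finite[OF f0] .

lemma g_deg: "degree g = n \<and> lead_coeff g = lead_coeff f"
proof -
  have d: "degree (smult r (pderiv f)) < n" using n1 degf
    by (metis degree_pderiv degree_smult_le diff_less le_less_trans less_one not_le order.not_eq_order_implies_strict zero_less_one)
  have "degree g = n" unfolding g_def using d degf
    by (metis degree_add_eq_left degree_minus diff_conv_add_uminus)
  moreover have "coeff (smult r (pderiv f)) n = 0" using d by (metis coeff_eq_0)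
  ultimately show ?thesis unfolding g_def using degf by simp
qed

lemma g0: "g \<noteq> 0" using g_deg n1 by auto

lemma lc0: "lead_coeff f \<noteq> 0" using f0 by simp

lemma g_root: "poly f x = 0 \<Longrightarrow>
   sgn (poly g x) = - sgn r * sgn (lead_coeff f) * (-1)^card {z. poly f z = 0 \<and> x < z}"
  using sgn_der[OF f0 cardS[folded degf]] unfolding g_def by (simp add: sgn_mult sgn_minus)

lemma g_T: "\<exists>T > B. (\<forall>z. poly f z = 0 \<longrightarrow> -T < z \<and> z < T) \<and>
   sgn (poly g T) = sgn (lead_coeff f) \<and> sgn (poly g (-T)) = (-1)^n * sgn (lead_coeff f)"
proof -
  obtain T1 where T1: "\<forall>x\<ge>T1. sgn (poly g x) = sgn (lead_coeff g)" using poly_sgn_pinf[OF g0] by blast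
  obtain T2 where T2: "\<forall>x\<le>T2. sgn (poly g x) = (-1)^degree g * sgn (lead_coeff g)" using poly_sgn_minf[OF g0] by blast
  define M where "M = (if {x. poly f x = 0} = {} then 0 else Max (abs ` {x. poly f x = 0}))"
  have M: "\<forall>z. poly f z = 0 \<longrightarrow> abs z \<le> M" unfolding M_def using finS by auto
  define T where "T = max (max B M) (max T1 (- T2)) + 1"
  have "T > B" by (simp add: T_def)
  moreover have "\<forall>z. poly f z = 0 \<longrightarrow> -T < z \<and> z < T" using M unfolding T_def by force
  moreover have "sgn (poly g T) = sgn (lead_coeff f)" using T1 g_deg unfolding T_def by auto
  moreover have "sgn (poly g (-T)) = (-1)^n * sgn (lead_coeff f)" using T2 g_deg unfolding T_def by auto
  ultimately show ?thesis by blast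
qed

lemma chainA:
  assumes "A \<subseteq> {x. poly f x = 0}" "A \<noteq> {}"
    and conv: "\<forall>x\<in>A. \<forall>y\<in>A. \<forall>z. poly f z = 0 \<and> x < z \<and> z < y \<longrightarrow> z \<in> A"
  shows "card A - 1 \<le> card {x. Min A < x \<and> x < Max A \<and> poly g x = 0}"
proof (rule cnt_chain[OF g0])
  show "finite A" using finite_subset[OF assms(1) finS] .
  show "A \<noteq> {}" by fact
  show "\<forall>x\<in>A. \<forall>y\<in>A. x < y \<and> (\<forall>z\<in>A. \<not> (x < z \<and> z < y)) \<longrightarrow> poly g x * poly g y < 0"
  proof (intro ballI impI)
    fix x y assume xy: "x \<in> A" "y \<in> A" "x < y \<and> (\<forall>z\<in>A. \<not> (x < z \<and> z < y))"
    have nz: "\<forall>z. poly f z = 0 \<longrightarrow> \<not> (x < z \<and> z < y)" using conv xy by blast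
    have e: "{z. poly f z = 0 \<and> x < z} = insert y {z. poly f z = 0 \<and> y < z}"
      using nz xy assms(1) by auto
    have fy: "finite {z. poly f z = 0 \<and> y < z}" by (rule finite_subset[OF _ finS]) auto
    have c: "card {z. poly f z = 0 \<and> x < z} = Suc (card {z. poly f z = 0 \<and> y < z})"
      unfolding e using fy by simp
    define cc where "cc = card {z. poly f z = 0 \<and> y < z}"
    have gx: "sgn (poly g x) = - sgn r * sgn (lead_coeff f) * (-1)^Suc cc"
      using g_root[of x] xy assms(1) c by (auto simp: cc_def)
    have gy: "sgn (poly g y) = - sgn r * sgn (lead_coeff f) * (-1)^cc"
      using g_root[of y] xy assms(1) by (auto simp: cc_def)
    have pp: "((-1::real)^cc) * ((-1)^cc) = 1" by (simp add: power_mult_distrib[symmetric])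
    have "sgn (poly g x) * sgn (poly g y) = - ((sgn r * sgn r) * (sgn (lead_coeff f) * sgn (lead_coeff f)) * (((-1::real)^cc) * ((-1)^cc)))"
      unfolding gx gy by (simp add: algebra_simps)
    then have "sgn (poly g x) * sgn (poly g y) = -1"
      using sgn_sq[OF r0] sgn_sq[OF lc0] pp by simp
    then show "poly g x * poly g y < 0" by (rule sgn_prod_neg)
  qed
qed

lemma pm1: "(-1::real)^n = - ((-1)^(n-1))" using n1 by (cases n) auto

lemma cnt_le_below: "card {x. u < x \<and> x < v \<and> poly g x = 0} \<le> card {x. x < v \<and> poly g x = 0}"
  by (rule card_mono[OF finite_subset[OF _ poly_roots_finite[OF g0]]]) auto

lemma cnt_le_above: "card {x. u < x \<and> x < v \<and> poly g x = 0} \<le> card {x. u < x \<and> poly g x = 0}"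
  by (rule card_mono[OF finite_subset[OF _ poly_roots_finite[OF g0]]]) auto

lemma cardRg: "card {x. poly g x = 0} \<le> n"
  using card_poly_roots_bound[OF g0] g_deg by simp

lemma ab_min: "poly f x0 = 0 \<Longrightarrow> (\<forall>z. poly f z = 0 \<longrightarrow> x0 \<le> z) \<Longrightarrow>
    card {z. poly f z = 0 \<and> x0 < z} = n - 1"
proof -
  assume a: "poly f x0 = 0" "\<forall>z. poly f z = 0 \<longrightarrow> x0 \<le> z"
  have "{z. poly f z = 0 \<and> x0 < z} = {z. poly f z = 0} - {x0}" using a by force
  then show ?thesis using cardS finS a by simp
qed

lemma ab_max: "(\<forall>z. poly f z = 0 \<longrightarrow> z \<le> x1) \<Longrightarrow> card {z. poly f z = 0 \<and> x1 < z} = 0"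
proof -
  assume a: "\<forall>z. poly f z = 0 \<longrightarrow> z \<le> x1"
  have "{z. poly f z = 0 \<and> x1 < z} = {}" using a by force
  then show ?thesis by (metis card.empty)
qed

lemma left_end:
  assumes "poly f x0 = 0" "\<forall>z. poly f z = 0 \<longrightarrow> x0 \<le> z" "-T < x0" "sgn (poly g (-T)) = (-1)^n * sgn (lead_coeff f)"
  shows "(if r < 0 then 1 else 0) \<le> card {x. -T < x \<and> x < x0 \<and> poly g x = 0}"
proof (cases "r < 0")
  case True
  have gx: "sgn (poly g x0) = - sgn r * sgn (lead_coeff f) * (-1)^(n-1)"
    using g_root[OF assms(1)] ab_min[OF assms(1,2)] by simp
  have pp: "((-1::real)^(n-1)) * ((-1)^(n-1)) = 1" by (simp add: power_mult_distrib[symmetric])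
  have "sgn (poly g (-T)) * sgn (poly g x0) = sgn r * (sgn (lead_coeff f) * sgn (lead_coeff f)) * (((-1::real)^(n-1)) * ((-1)^(n-1)))"
    unfolding gx assms(4) pm1 by (simp add: algebra_simps)
  also have "\<dots> = -1" using True sgn_sq[OF lc0] pp by simp
  finally have "poly g (-T) * poly g x0 < 0" by (rule sgn_prod_neg)
  then show ?thesis using cnt_ivt[OF g0 assms(3)] True by simp
qed simp

lemma right_end:
  assumes "poly f x1 = 0" "\<forall>z. poly f z = 0 \<longrightarrow> z \<le> x1" "x1 < T" "sgn (poly g T) = sgn (lead_coeff f)"
  shows "(if r > 0 then 1 else 0) \<le> card {x. x1 < x \<and> x < T \<and> poly g x = 0}"
proof (cases "r > 0")
  case True
  have gx: "sgn (poly g x1) = - sgn r * sgn (lead_coeff f)"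
    using g_root[OF assms(1)] ab_max[OF assms(2)] by simp
  have "sgn (poly g x1) * sgn (poly g T) = - sgn r * (sgn (lead_coeff f) * sgn (lead_coeff f))"
    unfolding gx assms(4) by (simp add: algebra_simps)
  also have "\<dots> = -1" using True sgn_sq[OF lc0] by simp
  finally have "poly g x1 * poly g T < 0" by (rule sgn_prod_neg)
  then show ?thesis using cnt_ivt[OF g0 assms(3)] True by simp
qed simp

lemma step_root:
  assumes "poly f a = 0"
  shows "poly g a \<noteq> 0 \<and> card {x. poly g x = 0} = n \<and>
    card {x. x < a \<and> poly g x = 0} = card {x. x < a \<and> poly f x = 0} + (if r < 0 then 1 else 0)"
proof -
  obtain T where T: "T > 0" "\<forall>z. poly f z = 0 \<longrightarrow> -T < z \<and> z < T"
    "sgn (poly g T) = sgn (lead_coeff f)" "sgn (poly g (-T)) = (-1)^n * sgn (lead_coeff f)"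
    using g_T[of 0] by blast
  define m where "m = card {x. x < a \<and> poly f x = 0}"
  define A1 where "A1 = {z. poly f z = 0 \<and> z \<le> a}"
  define A2 where "A2 = {z. poly f z = 0 \<and> a \<le> z}"
  have fA1: "finite A1" by (rule finite_subset[OF _ finS]) (auto simp: A1_def)
  have fA2: "finite A2" by (rule finite_subset[OF _ finS]) (auto simp: A2_def)
  have aA1: "a \<in> A1" "a \<in> A2" using assms by (auto simp: A1_def A2_def)
  have maxA1: "Max A1 = a" using fA1 aA1 by (intro Max_eqI) (auto simp: A1_def)
  have minA2: "Min A2 = a" using fA2 aA1 by (intro Min_eqI) (auto simp: A2_def)
  define x0 where "x0 = Min A1"
  define x1 where "x1 = Max A2"
  have x0A: "x0 \<in> A1" unfolding x0_def using fA1 aA1 by (intro Min_in) auto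
  have x1A: "x1 \<in> A2" unfolding x1_def using fA2 aA1 by (intro Max_in) auto
  have x0min: "\<forall>z. poly f z = 0 \<longrightarrow> x0 \<le> z"
  proof (intro allI impI)
    fix z assume "poly f z = 0"
    show "x0 \<le> z"
    proof (cases "z \<le> a")
      case True then show ?thesis unfolding x0_def using fA1 \<open>poly f z = 0\<close> by (auto simp: A1_def)
    next
      case False then show ?thesis using x0A by (auto simp: A1_def)
    qed
  qed
  have x1max: "\<forall>z. poly f z = 0 \<longrightarrow> z \<le> x1"
  proof (intro allI impI)
    fix z assume "poly f z = 0"
    show "z \<le> x1"
    proof (cases "a \<le> z")
      case True then show ?thesis unfolding x1_def using fA2 \<open>poly f z = 0\<close> by (auto simp: A2_def)
    next
      case False then show ?thesis using x1A by (auto simp: A2_def)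
    qed
  qed
  have cA1: "card A1 = Suc m"
  proof -
    have "A1 = insert a {x. x < a \<and> poly f x = 0}" using assms by (auto simp: A1_def)
    moreover have "finite {x. x < a \<and> poly f x = 0}" by (rule finite_subset[OF _ finS]) auto
    ultimately show ?thesis by (simp add: m_def)
  qed
  have cA2: "card A2 = n - m"
  proof -
    have "{z. poly f z = 0} = {x. x < a \<and> poly f x = 0} \<union> A2" by (auto simp: A2_def)
    moreover have "{x. x < a \<and> poly f x = 0} \<inter> A2 = {}" by (auto simp: A2_def)
    moreover have "finite {x. x < a \<and> poly f x = 0}" by (rule finite_subset[OF _ finS]) auto
    ultimately have "n = m + card A2" using cardS fA2 m_def by (metis card_Un_disjoint)
    then show ?thesis by simp
  qed
  have mn: "m < n" using cA2 aA1 fA2 by (metis card_gt_0_iff empty_iff zero_less_diff)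
  have ch1: "card A1 - 1 \<le> card {x. Min A1 < x \<and> x < Max A1 \<and> poly g x = 0}"
    by (rule chainA) (use aA1 in \<open>auto simp: A1_def\<close>)
  have ch2: "card A2 - 1 \<le> card {x. Min A2 < x \<and> x < Max A2 \<and> poly g x = 0}"
    by (rule chainA) (use aA1 in \<open>auto simp: A2_def\<close>)
  have le1: "(if r < 0 then 1 else 0) \<le> card {x. -T < x \<and> x < x0 \<and> poly g x = 0}"
    by (rule left_end) (use x0A x0min T in \<open>auto simp: A1_def\<close>)
  have le2: "(if r > 0 then 1 else 0) \<le> card {x. x1 < x \<and> x < T \<and> poly g x = 0}"
    by (rule right_end) (use x1A x1max T in \<open>auto simp: A2_def\<close>)
  have x0a: "-T \<le> x0" "x0 \<le> a" using x0A T by (auto simp: A1_def)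
  have x1a: "a \<le> x1" "x1 \<le> T" using x1A T by (auto simp: A2_def)
  have L1: "m + (if r < 0 then 1 else 0) \<le> card {x. x < a \<and> poly g x = 0}"
    using cnt_add[OF g0 x0a] ch1[unfolded maxA1] le1 cA1 cnt_le_below[of "-T" a] unfolding x0_def by linarith
  have L2: "(n - m - 1) + (if r > 0 then 1 else 0) \<le> card {x. a < x \<and> poly g x = 0}"
    using cnt_add[OF g0 x1a] ch2[unfolded minA2] le2 cA2 cnt_le_above[of a T] unfolding x1_def by linarith
  have ga: "poly g a \<noteq> 0" using g_root[OF assms] r0 lc0 by (auto simp: sgn_mult sgn_0_0)
  have "card {x. x < a \<and> poly g x = 0} = m + (if r < 0 then 1 else 0) \<and> card {x. poly g x = 0} = n
         \<and> card {x. a < x \<and> poly g x = 0} = (n - m - 1) + (if r > 0 then 1 else 0)"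
    by (rule split_count[OF g0 cardRg L1 L2]) (use mn r0 in auto)
  then show ?thesis using ga by (simp add: m_def)
qed

lemma step_nonroot:
  assumes fa: "poly f a \<noteq> 0" and m1: "1 \<le> card {x. x < a \<and> poly f x = 0}"
    and mn: "card {x. x < a \<and> poly f x = 0} < n"
  shows "card {x. poly g x = 0} = n \<and>
    (poly g a = 0 \<longrightarrow> card {x. x < a \<and> poly g x = 0} + 1 = card {x. x < a \<and> poly f x = 0} + (if r < 0 then 1 else 0)) \<and>
    (poly g a \<noteq> 0 \<longrightarrow> card {x. x < a \<and> poly g x = 0} + 1 = card {x. x < a \<and> poly f x = 0} + (if r < 0 then 1 else 0)
        + (if sgn (poly g a) = sgn r * sgn (poly f a) then 1 else 0))"
proof -
  obtain T where T: "T > \<bar>a\<bar>" "\<forall>z. poly f z = 0 \<longrightarrow> -T < z \<and> z < T"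
    "sgn (poly g T) = sgn (lead_coeff f)" "sgn (poly g (-T)) = (-1)^n * sgn (lead_coeff f)"
    using g_T[of "\<bar>a\<bar>"] by blast
  define m where "m = card {x. x < a \<and> poly f x = 0}"
  define A1 where "A1 = {z. poly f z = 0 \<and> z < a}"
  define A2 where "A2 = {z. poly f z = 0 \<and> a < z}"
  have fA1: "finite A1" by (rule finite_subset[OF _ finS]) (auto simp: A1_def)
  have fA2: "finite A2" by (rule finite_subset[OF _ finS]) (auto simp: A2_def)
  have cA1: "card A1 = m" unfolding m_def A1_def by (metis conj_commute)
  have cA2: "card A2 = n - m"
  proof -
    have "{z. poly f z = 0} = A1 \<union> A2" using fa by (auto simp: A1_def A2_def) (metis less_linear)
    moreover have "A1 \<inter> A2 = {}" by (auto simp: A1_def A2_def)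
    ultimately have "n = m + card A2" using cardS fA1 fA2 cA1 by (metis card_Un_disjoint)
    then show ?thesis by simp
  qed
  have neA1: "A1 \<noteq> {}" using cA1 m1 m_def by auto
  have neA2: "A2 \<noteq> {}" using cA2 mn m_def fA2 by auto
  define x0 where "x0 = Min A1"
  define p where "p = Max A1"
  define q where "q = Min A2"
  define x1 where "x1 = Max A2"
  have x0A: "x0 \<in> A1" unfolding x0_def using fA1 neA1 by simp
  have pA: "p \<in> A1" unfolding p_def using fA1 neA1 by simp
  have qA: "q \<in> A2" unfolding q_def using fA2 neA2 by simp
  have x1A: "x1 \<in> A2" unfolding x1_def using fA2 neA2 by simp
  have x0min: "\<forall>z. poly f z = 0 \<longrightarrow> x0 \<le> z"
  proof (intro allI impI)
    fix z assume "poly f z = 0"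
    show "x0 \<le> z"
    proof (cases "z < a")
      case True then show ?thesis unfolding x0_def using fA1 \<open>poly f z = 0\<close> by (auto simp: A1_def)
    next
      case False then show ?thesis using x0A by (auto simp: A1_def)
    qed
  qed
  have x1max: "\<forall>z. poly f z = 0 \<longrightarrow> z \<le> x1"
  proof (intro allI impI)
    fix z assume "poly f z = 0"
    show "z \<le> x1"
    proof (cases "a < z")
      case True then show ?thesis unfolding x1_def using fA2 \<open>poly f z = 0\<close> by (auto simp: A2_def)
    next
      case False then show ?thesis using x1A by (auto simp: A2_def)
    qed
  qed
  have abp: "{z. poly f z = 0 \<and> p < z} = A2"
  proof -
    have "\<forall>z\<in>A1. z \<le> p" unfolding p_def using fA1 by simp
    then have h: "\<forall>z. poly f z = 0 \<and> z < a \<longrightarrow> z \<le> p" by (auto simp: A1_def)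
    have pa: "p < a" using pA by (simp add: A1_def)
    show ?thesis
    proof (rule set_eqI, rule iffI)
      fix z assume z: "z \<in> {z. poly f z = 0 \<and> p < z}"
      then have "\<not> z < a" using h by force
      moreover have "z \<noteq> a" using z fa by auto
      ultimately show "z \<in> A2" using z by (auto simp: A2_def)
    next
      fix z assume "z \<in> A2"
      then show "z \<in> {z. poly f z = 0 \<and> p < z}" using pa by (auto simp: A2_def)
    qed
  qed
  have abq: "{z. poly f z = 0 \<and> q < z} = A2 - {q}"
  proof -
    have "\<forall>z\<in>A2. q \<le> z" unfolding q_def using fA2 by simp
    then show ?thesis using qA by (force simp: A2_def)
  qed
  have aba: "{z. poly f z = 0 \<and> a < z} = A2" by (auto simp: A2_def)
  have sf: "sgn (poly f a) = sgn (lead_coeff f) * (-1)^(n-m)"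
    using sgn_at[OF f0 cardS[folded degf] fa] aba cA2 by simp
  have gp: "sgn (poly g p) = - sgn r * sgn (poly f a)"
    using g_root[of p] pA abp cA2 sf by (simp add: A1_def)
  have nm1: "(-1::real)^(n-m) = - ((-1)^(n-m-1))" using mn m_def by (cases "n - m") auto
  have gq: "sgn (poly g q) = sgn r * sgn (poly f a)"
  proof -
    have "card (A2 - {q}) = n - m - 1" using cA2 qA fA2 by simp
    then have "sgn (poly g q) = - sgn r * sgn (lead_coeff f) * (-1)^(n-m-1)"
      using g_root[of q] qA abq by (simp add: A2_def)
    then show ?thesis unfolding sf nm1 by simp
  qed
  have sfa: "sgn (poly f a) * sgn (poly f a) = 1" using sgn_sq[OF fa] .
  have sr: "sgn r * sgn r = 1" using sgn_sq[OF r0] .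
  have ch1: "card A1 - 1 \<le> card {x. x0 < x \<and> x < p \<and> poly g x = 0}"
    unfolding x0_def p_def by (rule chainA) (use neA1 in \<open>auto simp: A1_def\<close>)
  have ch2: "card A2 - 1 \<le> card {x. q < x \<and> x < x1 \<and> poly g x = 0}"
    unfolding q_def x1_def by (rule chainA) (use neA2 in \<open>auto simp: A2_def\<close>)
  have le1: "(if r < 0 then 1 else 0) \<le> card {x. -T < x \<and> x < x0 \<and> poly g x = 0}"
    by (rule left_end) (use x0A x0min T in \<open>auto simp: A1_def\<close>)
  have le2: "(if r > 0 then 1 else 0) \<le> card {x. x1 < x \<and> x < T \<and> poly g x = 0}"
    by (rule right_end) (use x1A x1max T in \<open>auto simp: A2_def\<close>)
  have o1: "-T \<le> x0" "x0 \<le> p" using x0A pA T unfolding x0_def using fA1 by (auto simp: A1_def)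
  have o2: "p < a" "a < q" using pA qA by (auto simp: A1_def A2_def)
  have o3: "q \<le> x1" "x1 \<le> T" using x1A qA T unfolding x1_def using fA2 by (auto simp: A2_def)
  have B1: "(if r < 0 then 1 else 0) + (m - 1) \<le> card {x. -T < x \<and> x < p \<and> poly g x = 0}"
    using cnt_add[OF g0 o1] ch1 le1 cA1 by linarith
  have B2: "(n - m - 1) + (if r > 0 then 1 else 0) \<le> card {x. q < x \<and> x < T \<and> poly g x = 0}"
    using cnt_add[OF g0 o3] ch2 le2 cA2 by linarith
  show ?thesis
  proof (cases "poly g a = 0")
    case True
    have L1: "(if r < 0 then 1 else 0) + (m - 1) \<le> card {x. x < a \<and> poly g x = 0}"
      using B1 cnt_le_below[of "-T" p] card_roots_mono[OF g0, of "\<lambda>x. x < p" "\<lambda>x. x < a"] o2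
      by fastforce
    have L2: "(n - m - 1) + (if r > 0 then 1 else 0) \<le> card {x. a < x \<and> poly g x = 0}"
      using B2 cnt_le_above[of q T] card_roots_mono[OF g0, of "\<lambda>x. q < x" "\<lambda>x. a < x"] o2
      by fastforce
    have "card {x. x < a \<and> poly g x = 0} = (if r < 0 then 1 else 0) + (m - 1) \<and> card {x. poly g x = 0} = n
         \<and> card {x. a < x \<and> poly g x = 0} = (n - m - 1) + (if r > 0 then 1 else 0)"
      by (rule split_count[OF g0 cardRg L1 L2]) (use True mn m1 r0 m_def in auto)
    then show ?thesis using True m1 m_def by auto
  next
    case False
    define c where "c = (if sgn (poly g a) = sgn r * sgn (poly f a) then 1 else (0::nat))"
    have ga1: "sgn (poly g a) = 1 \<or> sgn (poly g a) = -1" using False by (auto simp: sgn_if)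
    have fa1: "sgn (poly f a) = 1 \<or> sgn (poly f a) = -1" using fa by (auto simp: sgn_if)
    have r1: "sgn r = 1 \<or> sgn r = -1" using r0 by (auto simp: sgn_if)
    have c1: "c \<le> card {x. p < x \<and> x < a \<and> poly g x = 0}"
    proof (cases "sgn (poly g a) = sgn r * sgn (poly f a)")
      case True
      have "sgn (poly g p) * sgn (poly g a) = -1" unfolding gp True using sr sfa
        by (simp add: algebra_simps)
      then have "poly g p * poly g a < 0" by (rule sgn_prod_neg)
      then show ?thesis using cnt_ivt[OF g0 o2(1)] True c_def by simp
    qed (simp add: c_def)
    have c2: "1 - c \<le> card {x. a < x \<and> x < q \<and> poly g x = 0}"
    proof (cases "sgn (poly g a) = sgn r * sgn (poly f a)")
      case False
      then have ne: "sgn (poly g a) = - (sgn r * sgn (poly f a))" using ga1 fa1 r1 by auto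
      have "sgn (poly g a) * sgn (poly g q) = -1" unfolding gq ne
        by (metis minus_mult_left mult.assoc mult.left_commute mult_1 sr sfa)
      then have "poly g a * poly g q < 0" by (rule sgn_prod_neg)
      then show ?thesis using cnt_ivt[OF g0 o2(2)] False c_def by simp
    qed (simp add: c_def)
    have o4: "-T \<le> p" "p \<le> a" using o1 o2 by auto
    have o5: "a \<le> q" "q \<le> T" using o2 o3 by auto
    have L1: "(if r < 0 then 1 else 0) + (m - 1) + c \<le> card {x. x < a \<and> poly g x = 0}"
      using B1 c1 cnt_add[OF g0 o4] cnt_le_below[of "-T" a] by linarith
    have L2: "(1 - c) + (n - m - 1) + (if r > 0 then 1 else 0) \<le> card {x. a < x \<and> poly g x = 0}"
      using B2 c2 cnt_add[OF g0 o5] cnt_le_above[of a T] by linarith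
    have "card {x. x < a \<and> poly g x = 0} = (if r < 0 then 1 else 0) + (m - 1) + c \<and> card {x. poly g x = 0} = n
         \<and> card {x. a < x \<and> poly g x = 0} = (1 - c) + (n - m - 1) + (if r > 0 then 1 else 0)"
      by (rule split_count[OF g0 cardRg L1 L2]) (use False mn m1 r0 m_def c_def in auto)
    then show ?thesis using False m1 m_def c_def by auto
  qed
qed

end



lemma hermite_RR_step:
  fixes f g :: "real poly" and n :: nat
  assumes RRf: "RR f" and degf: "degree f = n" and n1: "1 \<le> n" and lcf: "lead_coeff f > 0"
    and g_def: "g = [:0, 2:] * f - pderiv f" and degg: "degree g = Suc n" and lcg: "lead_coeff g > 0"
  shows "RR g"
proof -
  have f0: "f \<noteq> 0" using RRf by (simp add: RR_def)
  have g0: "g \<noteq> 0" using lcg by auto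
  have cardS: "card {x. poly f x = 0} = degree f" using RRf by (simp add: RR_def)
  have finS: "finite {x. poly f x = 0}" using poly_roots_finite[OF f0] .
  have groot: "sgn (poly g x) = - ((-1)^card {z. poly f z = 0 \<and> x < z})" if "poly f x = 0" for x
    using sgn_der[OF f0 cardS that] that lcf unfolding g_def by (simp add: sgn_minus)
  define S where "S = {x. poly f x = 0}"
  have neS: "S \<noteq> {}"
  proof
    assume "S = {}"
    then have "card {x. poly f x = 0} = 0" by (simp add: S_def)
    then show False using cardS degf n1 by simp
  qed
  have fS: "finite S" using finS by (simp add: S_def)
  have ch: "card S - 1 \<le> card {x. Min S < x \<and> x < Max S \<and> poly g x = 0}"
  proof (rule cnt_chain[OF g0 fS neS])
    show "\<forall>x\<in>S. \<forall>y\<in>S. x < y \<and> (\<forall>z\<in>S. \<not> (x < z \<and> z < y)) \<longrightarrow> poly g x * poly g y < 0"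
    proof (intro ballI impI)
      fix x y assume xy: "x \<in> S" "y \<in> S" "x < y \<and> (\<forall>z\<in>S. \<not> (x < z \<and> z < y))"
      have e: "{z. poly f z = 0 \<and> x < z} = insert y {z. poly f z = 0 \<and> y < z}"
        using xy by (auto simp: S_def)
      have fy: "finite {z. poly f z = 0 \<and> y < z}" by (rule finite_subset[OF _ finS]) auto
      define cc where "cc = card {z. poly f z = 0 \<and> y < z}"
      have c: "card {z. poly f z = 0 \<and> x < z} = Suc cc" unfolding e cc_def using fy by simp
      have gx: "sgn (poly g x) = (-1)^cc" using groot[of x] xy c by (simp add: S_def)
      have gy: "sgn (poly g y) = - ((-1)^cc)" using groot[of y] xy by (simp add: S_def cc_def)
      have "sgn (poly g x) * sgn (poly g y) = -1" unfolding gx gy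
        by (simp add: power_mult_distrib[symmetric])
      then show "poly g x * poly g y < 0" by (rule sgn_prod_neg)
    qed
  qed
  obtain T1 where T1: "\<forall>x\<ge>T1. sgn (poly g x) = sgn (lead_coeff g)" using poly_sgn_pinf[OF g0] by blast
  obtain T2 where T2: "\<forall>x\<le>T2. sgn (poly g x) = (-1)^degree g * sgn (lead_coeff g)" using poly_sgn_minf[OF g0] by blast
  define x0 where "x0 = Min S"
  define x1 where "x1 = Max S"
  have x0S: "x0 \<in> S" and x1S: "x1 \<in> S" using fS neS by (auto simp: x0_def x1_def)
  define T where "T = max (max T1 (-T2)) (max (abs x0) (abs x1)) + 1"
  have gT: "sgn (poly g T) = 1" using T1 lcg unfolding T_def by auto
  have gmT: "sgn (poly g (-T)) = (-1)^Suc n" using T2 lcg degg unfolding T_def by auto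
  have ab0: "card {z. poly f z = 0 \<and> x0 < z} = n - 1"
  proof -
    have "\<forall>z\<in>S. x0 \<le> z" using fS by (simp add: x0_def)
    then have "{z. poly f z = 0 \<and> x0 < z} = S - {x0}" using x0S by (force simp: S_def)
    then show ?thesis using cardS degf fS x0S by (simp add: S_def)
  qed
  have ab1: "card {z. poly f z = 0 \<and> x1 < z} = 0"
  proof -
    have "\<forall>z\<in>S. z \<le> x1" using fS by (simp add: x1_def)
    then have "{z. poly f z = 0 \<and> x1 < z} = {}" by (force simp: S_def)
    then show ?thesis by (metis card.empty)
  qed
  have g0s: "sgn (poly g x0) = - ((-1)^(n-1))" using groot[of x0] x0S ab0 by (simp add: S_def)
  have g1s: "sgn (poly g x1) = -1" using groot[of x1] x1S ab1 by (simp add: S_def)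
  have pn: "(-1::real)^Suc n = (-1)^(n-1)" using n1 by (cases n) auto
  have "sgn (poly g (-T)) * sgn (poly g x0) = -1" unfolding gmT g0s pn
    by (simp add: power_mult_distrib[symmetric])
  then have l: "1 \<le> card {x. -T < x \<and> x < x0 \<and> poly g x = 0}"
    using cnt_ivt[OF g0, of "-T" x0] sgn_prod_neg unfolding T_def by force
  have "sgn (poly g x1) * sgn (poly g T) = -1" unfolding gT g1s by simp
  then have r: "1 \<le> card {x. x1 < x \<and> x < T \<and> poly g x = 0}"
    using cnt_ivt[OF g0, of x1 T] sgn_prod_neg unfolding T_def by force
  have o1: "-T \<le> x0" "x0 \<le> x1" using fS x0S unfolding T_def x0_def x1_def by auto
  have o2: "-T \<le> x1" "x1 \<le> T" using fS x1S unfolding T_def by auto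
  have "card {x. -T < x \<and> x < x0 \<and> poly g x = 0} + card {x. x0 < x \<and> x < x1 \<and> poly g x = 0}
     + card {x. x1 < x \<and> x < T \<and> poly g x = 0} \<le> card {x. poly g x = 0}"
    using cnt_add[OF g0 o1] cnt_add[OF g0 o2] card_roots_mono[OF g0, of "\<lambda>x. -T < x \<and> x < T" "\<lambda>x. True"]
    by simp
  then have "Suc n \<le> card {x. poly g x = 0}"
    using l r ch cardS degf unfolding S_def x0_def x1_def by linarith
  moreover have "card {x. poly g x = 0} \<le> Suc n" using card_poly_roots_bound[OF g0] degg by simp
  ultimately show ?thesis unfolding RR_def using g0 degg by simp
qed

lemma hermite_RR: "RR (hermite n)"
proof (induction n)
  case 0 then show ?case by (simp add: RR_def)
next
  case (Suc n)
  show ?case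
  proof (cases n)
    case 0
    have "{x. poly [:0, 2::real:] x = 0} = {0}" by auto
    then show ?thesis using 0 by (simp add: RR_def)
  next
    case (Suc k)
    show ?thesis
      by (rule hermite_RR_step[OF Suc.IH _ _ _ hermite_rec])
         (use hermite_deg_lc[of n] hermite_deg_lc[of "Suc n"] Suc in auto)
  qed
qed

lemma hh_RR: "RR (hh n)"
  using hermite_RR[of n] hermite_deg_lc[of n] by (simp add: RR_def hh_def)



fun stp :: "real list \<Rightarrow> real poly \<Rightarrow> real poly" where
  "stp [] f = f"
| "stp (r # rs) f = stp rs f - smult r (pderiv (stp rs f))"

definition PP :: "real list \<Rightarrow> real poly" where
  "PP rs = (\<Prod>r\<leftarrow>rs. [:-r, 1:])"

lemma PP_Cons: "PP (r # rs) = [:-r, 1:] * PP rs" by (simp add: PP_def)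

lemma PP_deg: "degree (PP rs) = length rs \<and> lead_coeff (PP rs) = 1"
proof (induction rs)
  case Nil then show ?case by (simp add: PP_def)
next
  case (Cons r rs)
  have "PP rs \<noteq> 0" using Cons by auto
  have "lead_coeff ([:-r, 1:] * PP rs) = lead_coeff [:-r, 1:] * lead_coeff (PP rs)" by (rule lead_coeff_mult)
  moreover have "degree (PP rs) = length rs" "coeff (PP rs) (length rs) = 1" using Cons by auto
  ultimately show ?case using \<open>PP rs \<noteq> 0\<close> by (simp add: PP_Cons degree_mult_eq del: mult_pCons_left)
qed

lemma pderiv_sum': "pderiv (sum f A) = (\<Sum>x\<in>A. pderiv (f x))"
  using higher_pderiv_sum[of 1 f A] by simp

lemma smult_sum_right: "smult a (sum f A) = (\<Sum>x\<in>A. smult a (f x))"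
  by (induction A rule: infinite_finite_induct) (auto simp: smult_add_right)

lemma stp_expand:
  "stp rs f = (\<Sum>i\<le>length rs. smult (coeff (PP rs) i) ((pderiv ^^ (length rs - i)) f))"
proof (induction rs)
  case Nil then show ?case by (simp add: PP_def)
next
  case (Cons r rs)
  define L where "L = length rs"
  define P where "P = PP rs"
  define G where "G = stp rs f"
  have IH: "G = (\<Sum>i\<le>L. smult (coeff P i) ((pderiv ^^ (L - i)) f))"
    using Cons by (simp add: G_def L_def P_def)
  have cP: "coeff P (Suc L) = 0" using PP_deg[of rs] by (simp add: P_def L_def coeff_eq_0)
  have PC: "PP (r # rs) = pCons 0 P - smult r P" by (simp add: PP_def P_def)
  have s1: "(\<Sum>i\<le>Suc L. smult (coeff (pCons 0 P) i) ((pderiv ^^ (Suc L - i)) f)) = G"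
    unfolding sum.atMost_Suc_shift IH by simp
  have s2: "(\<Sum>i\<le>Suc L. smult (coeff P i) ((pderiv ^^ (Suc L - i)) f)) = pderiv G"
  proof -
    have "(\<Sum>i\<le>Suc L. smult (coeff P i) ((pderiv ^^ (Suc L - i)) f))
        = (\<Sum>i\<le>L. smult (coeff P i) ((pderiv ^^ (Suc L - i)) f))"
      using cP by simp
    also have "\<dots> = (\<Sum>i\<le>L. pderiv (smult (coeff P i) ((pderiv ^^ (L - i)) f)))"
      by (rule sum.cong) (auto simp: pderiv_smult Suc_diff_le)
    also have "\<dots> = pderiv G" unfolding IH pderiv_sum' ..
    finally show ?thesis .
  qed
  have "stp (r # rs) f = G - smult r (pderiv G)" by (simp add: G_def)
  also have "\<dots> = (\<Sum>i\<le>Suc L. smult (coeff (pCons 0 P) i) ((pderiv ^^ (Suc L - i)) f))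
      - smult r (\<Sum>i\<le>Suc L. smult (coeff P i) ((pderiv ^^ (Suc L - i)) f))"
    unfolding s1 s2 ..
  also have "\<dots> = (\<Sum>i\<le>Suc L. smult (coeff (PP (r # rs)) i) ((pderiv ^^ (Suc L - i)) f))"
    unfolding PC smult_sum_right sum_subtractf[symmetric] by (rule sum.cong) (auto simp: algebra_simps smult_diff_left)
  finally show ?case by (simp add: L_def)
qed

lemma hh_higher: "k \<le> n \<Longrightarrow> (pderiv ^^ k) (hh n) = hh (n - k)"
proof (induction k)
  case 0 then show ?case by simp
next
  case (Suc k)
  then have "(pderiv ^^ k) (hh n) = hh (Suc (n - Suc k))" by (simp add: Suc_diff_Suc)
  then show ?case by (simp add: hh_pderiv)
qed

lemma stp_at0:
  assumes "length rs \<le> n"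
  shows "poly (stp rs (hh n)) 0 = (\<Sum>i\<le>length rs. coeff (PP rs) i * poly (hh (n - length rs + i)) 0)"
  unfolding stp_expand[of rs] poly_sum
  by (rule sum.cong) (use assms in \<open>auto simp: hh_higher\<close>)

lemma PP_coeff0: "coeff (PP rs) 0 = (\<Prod>r\<leftarrow>rs. - r)"
proof -
  have "coeff (PP rs) 0 = poly (PP rs) 0" by (simp add: poly_0_coeff_0)
  also have "\<dots> = (\<Prod>r\<leftarrow>rs. - r)" unfolding PP_def by (induction rs) auto
  finally show ?thesis .
qed

lemma hz_bound:
  assumes "1 \<le> i"
  shows "\<bar>poly (hh (2*p + i)) 0\<bar> \<le> 1 / (4^p * fact p) / (4 * (real p + 1))"
proof (cases "even i")
  case True
  then obtain j where j: "i = 2*j" by (auto elim: evenE)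
  then have j1: "1 \<le> j" using assms by simp
  have e: "2*p + i = 2*(p+j)" using j by simp
  have "(4::real)^(Suc p) * fact (Suc p) \<le> 4^(p+j) * fact (p+j)"
    by (intro mult_mono power_increasing fact_mono) (use j1 in auto)
  moreover have eq: "(4::real)^(Suc p) * fact (Suc p) = 4^p * fact p * (4 * (real p + 1))"
    by (simp add: algebra_simps)
  ultimately have le: "4^p * fact p * (4 * (real p + 1)) \<le> (4::real)^(p+j) * fact (p+j)" by (simp only: eq)
  have pos: "0 < (4::real)^p * fact p * (4 * (real p + 1))" by simp
  have "\<bar>poly (hh (2*p + i)) 0\<bar> = 1 / (4^(p+j) * fact (p+j))"
    unfolding e hh_zero_even by (simp add: abs_mult)
  also have "\<dots> \<le> 1 / (4^p * fact p * (4 * (real p + 1)))"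
    by (rule divide_left_mono[OF le]) (use pos in auto)
  finally show ?thesis by simp
next
  case False
  then obtain j where "i = Suc (2*j)" by (metis oddE Suc_eq_plus1)
  then have e: "2*p + i = Suc (2*(p+j))" by simp
  show ?thesis unfolding e hh_zero_odd by simp
qed

lemma sgn_dom: "\<bar>E\<bar> < \<bar>X\<bar> \<Longrightarrow> sgn (X + E) = sgn (X::real)"
  by (auto simp: sgn_if)

lemma stp_sign0:
  assumes "\<forall>r\<in>set rs. r \<noteq> 0"
  shows "\<exists>n0. \<forall>n\<ge>n0. even (n - length rs) \<longrightarrow>
     sgn (poly (stp rs (hh n)) 0) = sgn (\<Prod>r\<leftarrow>rs. - r) * (-1)^((n - length rs) div 2)"
proof -
  define L where "L = length rs"
  define c where "c = (\<lambda>i. coeff (PP rs) i)"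
  define C where "C = (\<Sum>i\<le>L. \<bar>c i\<bar>)"
  have c0: "c 0 = (\<Prod>r\<leftarrow>rs. - r)" by (simp add: c_def PP_coeff0)
  have c0nz: "c 0 \<noteq> 0" unfolding c0 using assms by (induction rs) auto
  obtain p0 :: nat where p0: "C / (4 * \<bar>c 0\<bar>) < p0" using reals_Archimedean2 by blast
  show ?thesis
  proof (intro exI[of _ "L + 2 * p0"] allI impI)
    fix n assume n: "L + 2 * p0 \<le> n" and ev: "even (n - length rs)"
    define p where "p = (n - L) div 2"
    have np: "n - L = 2 * p" using ev by (simp add: p_def L_def)
    have pp0: "p0 \<le> p" using n np by simp
    define u where "u = 1 / (4^p * fact p :: real)"
    have u0: "u > 0" by (simp add: u_def)
    have val: "poly (stp rs (hh n)) 0 = c 0 * ((-1)^p * u) + (\<Sum>i\<in>{1..L}. c i * poly (hh (2*p + i)) 0)"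
    proof -
      have "poly (stp rs (hh n)) 0 = (\<Sum>i\<le>L. c i * poly (hh (n - L + i)) 0)"
        using stp_at0[of rs n] n by (simp add: L_def c_def)
      also have "\<dots> = (\<Sum>i\<le>L. c i * poly (hh (2*p + i)) 0)" unfolding np ..
      also have "\<dots> = c 0 * poly (hh (2*p)) 0 + (\<Sum>i\<in>{1..L}. c i * poly (hh (2*p + i)) 0)"
        by (simp add: atMost_atLeast0 sum.atLeast_Suc_atMost)
      finally show ?thesis by (simp add: hh_zero_even u_def)
    qed
    have Eb: "\<bar>\<Sum>i\<in>{1..L}. c i * poly (hh (2*p + i)) 0\<bar> \<le> C * (u / (4 * (real p + 1)))"
    proof -
      have "\<bar>\<Sum>i\<in>{1..L}. c i * poly (hh (2*p + i)) 0\<bar> \<le> (\<Sum>i\<in>{1..L}. \<bar>c i\<bar> * (u / (4 * (real p + 1))))"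
      proof (rule order_trans[OF sum_abs], rule sum_mono)
        fix i assume "i \<in> {1..L}"
        then have "\<bar>poly (hh (2*p + i)) 0\<bar> \<le> u / (4 * (real p + 1))" using hz_bound[of i p] by (simp add: u_def)
        then show "\<bar>c i * poly (hh (2*p + i)) 0\<bar> \<le> \<bar>c i\<bar> * (u / (4 * (real p + 1)))"
          unfolding abs_mult by (rule mult_left_mono) simp
      qed
      also have "\<dots> \<le> (\<Sum>i\<le>L. \<bar>c i\<bar>) * (u / (4 * (real p + 1)))"
        unfolding sum_distrib_right[symmetric]
        by (intro mult_right_mono sum_mono2) (use u0 in auto)
      finally show ?thesis by (simp add: C_def)
    qed
    have "C < 4 * \<bar>c 0\<bar> * real p0" using p0 c0nz by (simp add: field_simps)
    also have "\<dots> \<le> 4 * \<bar>c 0\<bar> * real p" using pp0 by (simp add: mult_left_mono)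
    also have "\<dots> < 4 * \<bar>c 0\<bar> * (real p + 1)" using c0nz by simp
    finally have X: "C < 4 * \<bar>c 0\<bar> * (real p + 1)" .
    have "C * u < 4 * \<bar>c 0\<bar> * (real p + 1) * u" using X u0 by (rule mult_strict_right_mono)
    then have "C * (u / (4 * (real p + 1))) < \<bar>c 0\<bar> * u" by (simp add: field_simps)
    then have "\<bar>\<Sum>i\<in>{1..L}. c i * poly (hh (2*p + i)) 0\<bar> < \<bar>c 0 * ((-1)^p * u)\<bar>"
      using Eb u0 by (simp add: abs_mult)
    then have "sgn (poly (stp rs (hh n)) 0) = sgn (c 0 * ((-1)^p * u))"
      unfolding val by (rule sgn_dom)
    then show "sgn (poly (stp rs (hh n)) 0) = sgn (\<Prod>r\<leftarrow>rs. - r) * (-1)^((n - length rs) div 2)"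
      using u0 by (simp add: sgn_mult c0 p_def L_def)
  qed
qed



lemma card_split3:
  fixes g :: "real poly"
  assumes "g \<noteq> 0"
  shows "card {x. poly g x = 0} = card {x. x < a \<and> poly g x = 0} + card {x. a < x \<and> poly g x = 0} + (if poly g a = 0 then 1 else 0)"
proof -
  have fin: "finite {x. poly g x = 0}" using poly_roots_finite[OF assms(1)] .
  have f1: "finite {x. x < a \<and> poly g x = 0}" by (rule finite_subset[OF _ fin]) auto
  have f2: "finite {x. a < x \<and> poly g x = 0}" by (rule finite_subset[OF _ fin]) auto
  have e: "{x. poly g x = 0} = ({x. x < a \<and> poly g x = 0} \<union> {x. a < x \<and> poly g x = 0}) \<union> {x. x = a \<and> poly g x = 0}"
    by auto
  have "{x. x = a \<and> poly g x = 0} = (if poly g a = 0 then {a} else {})" by auto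
  then have c3: "card {x. x = a \<and> poly g x = 0} = (if poly g a = 0 then 1 else 0)" by simp
  show ?thesis
    apply (subst e)
    apply (subst card_Un_disjoint)
       apply (use f1 f2 in auto)[3]
    apply (subst card_Un_disjoint)
    using f1 f2 c3 by auto
qed

lemma hh_neg: "card {x. x < 0 \<and> poly (hh n) x = 0} = n div 2 \<and> (poly (hh n) 0 = 0 \<longleftrightarrow> odd n)"
proof -
  define S1 where "S1 = {x. x < 0 \<and> poly (hh n) x = 0}"
  define S2 where "S2 = {x::real. 0 < x \<and> poly (hh n) x = 0}"
  have "S2 = uminus ` S1"
  proof (rule set_eqI, rule iffI)
    fix x assume "x \<in> S2"
    then have "-x \<in> S1" using hh_parity[of n x] by (auto simp: S1_def S2_def)
    then show "x \<in> uminus ` S1" by (metis image_eqI minus_minus)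
  next
    fix x assume "x \<in> uminus ` S1"
    then obtain y where "y \<in> S1" "x = -y" by auto
    then show "x \<in> S2" using hh_parity[of n y] by (auto simp: S1_def S2_def)
  qed
  then have c2: "card S2 = card S1" by (simp add: card_image)
  have z: "poly (hh n) 0 = 0 \<longleftrightarrow> odd n"
  proof (cases "even n")
    case True
    then obtain p where "n = 2*p" by (auto elim: evenE)
    then show ?thesis using hh_zero_even[of p] by simp
  next
    case False
    then obtain p where "n = Suc (2*p)" by (metis oddE Suc_eq_plus1)
    then show ?thesis using hh_zero_odd[of p] by simp
  qed
  have "n = card S1 + card S2 + (if poly (hh n) 0 = 0 then 1 else 0)"
    using card_split3[OF hh_nz, of n 0] hh_RR[of n] hh_deg[of n] by (simp add: RR_def S1_def S2_def)
  then have "n = 2 * card S1 + (if odd n then 1 else 0)" using c2 z by simp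
  then show ?thesis using z by (auto simp: S1_def)
qed

lemma one_RR:
  assumes "RR f" "degree f = n" "1 \<le> n" "r \<noteq> 0"
  shows "RR (f - smult r (pderiv f)) \<and> degree (f - smult r (pderiv f)) = n"
proof -
  have "card {x. poly f x = 0} = n" using assms by (simp add: RR_def)
  then have "{x. poly f x = 0} \<noteq> {}" using assms(3) by (metis card.empty not_one_le_zero)
  then obtain a where "poly f a = 0" by auto
  then show ?thesis
    using step_root[OF assms refl, of a] g_deg[OF assms refl] g0[OF assms refl] by (simp add: RR_def)
qed

lemma stp_RR:
  assumes "\<forall>r\<in>set rs. r \<noteq> 0" "1 \<le> n"
  shows "RR (stp rs (hh n)) \<and> degree (stp rs (hh n)) = n"
  using assms
proof (induction rs)
  case Nil then show ?case using hh_RR hh_deg by simp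
next
  case (Cons r rs)
  then show ?case using one_RR[of "stp rs (hh n)" n r] by simp
qed

lemma sgn_pm1: "(x::real) \<noteq> 0 \<Longrightarrow> sgn x = 1 \<or> sgn x = -1"
  by (auto simp: sgn_if)

lemma prod_nz: "\<forall>r\<in>set rs. r \<noteq> 0 \<Longrightarrow> (\<Prod>r\<leftarrow>rs. - r) \<noteq> (0::real)"
  by (induction rs) auto

lemma main_even:
  assumes "\<forall>r\<in>set rs. r \<noteq> 0"
  shows "\<exists>n0. \<forall>n\<ge>n0. even (n - length rs) \<longrightarrow> poly (stp rs (hh n)) 0 \<noteq> 0 \<and>
     card {x. x < 0 \<and> poly (stp rs (hh n)) x = 0} = (n - length rs) div 2 + length (filter (\<lambda>r. r < 0) rs)"
  using assms
proof (induction rs rule: induct_list012)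
  case 1
  show ?case using hh_neg by auto
next
  case (2 r)
  have r0: "r \<noteq> 0" using 2 by simp
  show ?case
  proof (intro exI[of _ 1] allI impI conjI)
    fix n :: nat assume n1: "1 \<le> n" and ev: "even (n - length [r])"
    then have od: "odd n" by simp
    then have z: "poly (hh n) 0 = 0" using hh_neg by simp
    have st: "stp [r] (hh n) = hh n - smult r (pderiv (hh n))" by simp
    note sr = step_root[OF hh_RR hh_deg[of n] n1 r0 refl z]
    show "poly (stp [r] (hh n)) 0 \<noteq> 0" unfolding st using sr by simp
    have "n div 2 = (n - 1) div 2" using od by (metis odd_two_times_div_two_nat odd_pos diff_Suc_1 div_mult_self1_is_m zero_less_numeral)
    then show "card {x. x < 0 \<and> poly (stp [r] (hh n)) x = 0} = (n - length [r]) div 2 + length (filter (\<lambda>r. r < 0) [r])"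
      unfolding st using sr hh_neg[of n] by simp
  qed
next
  case (3 s r rs)
  have nz: "\<forall>x\<in>set rs. x \<noteq> 0" and s0: "s \<noteq> 0" and r0: "r \<noteq> 0" using "3.prems" by auto
  obtain n1 where n1: "\<forall>n\<ge>n1. even (n - length rs) \<longrightarrow> poly (stp rs (hh n)) 0 \<noteq> 0 \<and>
     card {x. x < 0 \<and> poly (stp rs (hh n)) x = 0} = (n - length rs) div 2 + length (filter (\<lambda>r. r < 0) rs)"
    using "3.IH"(1) nz by blast
  obtain n2 where n2: "\<forall>n\<ge>n2. even (n - length rs) \<longrightarrow>
     sgn (poly (stp rs (hh n)) 0) = sgn (\<Prod>r\<leftarrow>rs. - r) * (-1)^((n - length rs) div 2)"
    using stp_sign0[OF nz] by blast
  obtain n3 where n3: "\<forall>n\<ge>n3. even (n - length (s # r # rs)) \<longrightarrow>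
     sgn (poly (stp (s # r # rs) (hh n)) 0) = sgn (\<Prod>r\<leftarrow>(s # r # rs). - r) * (-1)^((n - length (s # r # rs)) div 2)"
    using stp_sign0[OF "3.prems"] by blast
  define L where "L = length rs"
  show ?case
  proof (intro exI[of _ "max n1 (max n2 (max n3 (L + 4)))"] allI impI)
    fix n assume nge: "max n1 (max n2 (max n3 (L + 4))) \<le> n" and ev: "even (n - length (s # r # rs))"
    define k where "k = (n - L) div 2"
    have evL: "even (n - L)" using ev nge by (simp add: L_def)
    have nk: "n = L + 2 * k" using evL nge unfolding k_def by (metis dvd_mult_div_cancel le_add_diff_inverse max.bounded_iff le_add1 order_trans)
    have k2: "2 \<le> k" using nge nk by simp
    have nn1: "1 \<le> n" using nk k2 by simp
    define f where "f = stp rs (hh n)"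
    define g where "g = f - smult r (pderiv f)"
    define h where "h = g - smult s (pderiv g)"
    have hdef: "stp (s # r # rs) (hh n) = h" by (simp add: h_def g_def f_def)
    have RRf: "RR f" "degree f = n" using stp_RR[OF nz nn1] by (simp_all add: f_def)
    have RRg: "RR g" "degree g = n" using one_RR[OF RRf nn1 r0] by (simp_all add: g_def)
    define m where "m = card {x. x < 0 \<and> poly f x = 0}"
    have f0: "poly f 0 \<noteq> 0" and mdef: "m = k + length (filter (\<lambda>r. r < 0) rs)"
      using n1 nge evL by (auto simp: f_def m_def k_def L_def)
    have negle: "length (filter (\<lambda>r. r < 0) rs) \<le> L" unfolding L_def by (rule length_filter_le)
    have m1: "2 \<le> m" "m + 2 \<le> n" using mdef k2 nk negle by auto
    have sf: "sgn (poly f 0) = sgn (\<Prod>r\<leftarrow>rs. - r) * (-1)^k"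
      using n2 nge evL by (simp add: f_def k_def L_def)
    have ekm: "(n - length (s # r # rs)) div 2 = k - 1" using nk by (simp add: L_def)
    have pk: "(-1::real)^k = - ((-1)^(k-1))" using k2 by (cases k) auto
    have "sgn (poly (stp (s # r # rs) (hh n)) 0) = sgn (\<Prod>r\<leftarrow>(s # r # rs). - r) * (-1)^((n - length (s # r # rs)) div 2)"
      using n3 nge ev by auto
    then have h3: "sgn (poly h 0) = sgn (\<Prod>r\<leftarrow>(s # r # rs). - r) * (-1)^(k-1)"
      by (simp only: hdef ekm)
    have pr: "sgn (\<Prod>r\<leftarrow>(s # r # rs). - r) = sgn s * sgn r * sgn (\<Prod>r\<leftarrow>rs. - r)"
      by (simp add: sgn_mult sgn_minus)
    have sh: "sgn (poly h 0) = - (sgn s * sgn r * sgn (poly f 0))"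
      unfolding h3 pr sf pk by (simp add: algebra_simps)
    have h0: "poly h 0 \<noteq> 0"
    proof
      assume "poly h 0 = 0"
      then have "sgn s * sgn r * sgn (poly f 0) = 0" using sh by simp
      then show False using s0 r0 f0 by (simp add: sgn_mult[symmetric] sgn_0_0)
    qed
    note NG = step_nonroot[OF RRf nn1 r0 g_def f0, unfolded m_def[symmetric]]
    have target: "(n - length (s # r # rs)) div 2 + length (filter (\<lambda>r. r < 0) (s # r # rs))
       = m - 1 + (if r < 0 then 1 else 0) + (if s < 0 then 1 else 0)"
      unfolding ekm mdef using k2 by simp
    have "card {x. x < 0 \<and> poly h x = 0} = m - 1 + (if r < 0 then 1 else 0) + (if s < 0 then 1 else 0)"
    proof (cases "poly g 0 = 0")
      case True
      have Ng: "card {x. x < 0 \<and> poly g x = 0} + 1 = m + (if r < 0 then 1 else 0)"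
        using NG m1 True by simp
      note SR = step_root[OF RRg nn1 s0 h_def True]
      show ?thesis using SR Ng m1 by (simp split: if_splits)
    next
      case False
      define c where "c = (if sgn (poly g 0) = sgn r * sgn (poly f 0) then 1 else (0::nat))"
      have Ng: "card {x. x < 0 \<and> poly g x = 0} + 1 = m + (if r < 0 then 1 else 0) + c"
        using NG m1 False by (simp add: c_def)
      have b1: "1 \<le> card {x. x < 0 \<and> poly g x = 0}" "card {x. x < 0 \<and> poly g x = 0} < n"
        using Ng m1 by (auto simp: c_def split: if_splits)
      note NH = step_nonroot[OF RRg nn1 s0 h_def False b1]
      define d where "d = (if sgn (poly h 0) = sgn s * sgn (poly g 0) then 1 else (0::nat))"
      have Nh: "card {x. x < 0 \<and> poly h x = 0} + 1 = card {x. x < 0 \<and> poly g x = 0} + (if s < 0 then 1 else 0) + d"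
        using NH h0 by (simp add: d_def)
      have cd: "c + d = 1"
        using sgn_pm1[OF False] sgn_pm1[OF f0] sgn_pm1[OF r0] sgn_pm1[OF s0] sh
        unfolding c_def d_def by (auto simp: algebra_simps)
      show ?thesis using Ng Nh cd m1 by (simp split: if_splits)
    qed
    then show "poly (stp (s # r # rs) (hh n)) 0 \<noteq> 0 \<and>
         card {x. x < 0 \<and> poly (stp (s # r # rs) (hh n)) x = 0} =
         (n - length (s # r # rs)) div 2 + length (filter (\<lambda>r. r < 0) (s # r # rs))"
      unfolding hdef target using h0 by simp
  qed
qed



lemma map_of_real_mult: "map_poly (of_real::real\<Rightarrow>complex) (p * q) = map_poly of_real p * map_poly of_real q"
  by (rule poly_eqI) (simp add: coeff_map_poly coeff_mult)

lemma poly_map_of_real: "poly (map_poly (of_real::real\<Rightarrow>complex) p) (of_real x) = of_real (poly p x)"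
  by (induction p) (auto simp: map_poly_pCons)

lemma real_factor:
  fixes P :: "real poly"
  assumes "lead_coeff P = 1" "\<forall>z::complex. poly (map_poly complex_of_real P) z = 0 \<longrightarrow> z \<in> \<real>"
  shows "\<exists>rs. P = PP rs \<and> length rs = degree P"
proof -
  obtain d where "degree P = d" by blast
  then show ?thesis using assms
  proof (induction d arbitrary: P)
    case 0
    then have "P = [:1:]" by (metis degree_eq_zeroE lead_coeff_pCons(1) pCons_0_0 coeff_pCons_0)
    then show ?case using 0 by (intro exI[of _ "[]"]) (simp add: PP_def)
  next
    case (Suc d)
    define Pc where "Pc = map_poly (of_real::real\<Rightarrow>complex) P"
    have dPc: "degree Pc = Suc d" unfolding Pc_def using Suc.prems by (subst degree_map_poly) auto
    then have "\<not> constant (poly Pc)" by (simp add: constant_degree)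
    then obtain z where z: "poly Pc z = 0" using fundamental_theorem_of_algebra by blast
    then have "z \<in> \<real>" using Suc.prems by (simp add: Pc_def)
    then obtain x where zx: "z = of_real x" by (auto elim: Reals_cases)
    have "of_real (poly P x) = (0::complex)" using z zx poly_map_of_real[of P x] by (simp add: Pc_def)
    then have "poly P x = 0" by simp
    then have "[:-x,1:] dvd P" using poly_eq_0_iff_dvd by blast
    then obtain Q where Q: "P = [:-x,1:] * Q" by (auto elim: dvdE)
    have Q0: "Q \<noteq> 0" using Q Suc.prems by auto
    have dQ: "degree Q = d" using Q Q0 Suc.prems(1) by (simp add: degree_mult_eq del: mult_pCons_left)
    have "lead_coeff P = lead_coeff [:-x,1:] * lead_coeff Q" unfolding Q by (rule lead_coeff_mult)
    then have lQ: "lead_coeff Q = 1" using Suc.prems by simp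
    have rQ: "\<forall>w::complex. poly (map_poly complex_of_real Q) w = 0 \<longrightarrow> w \<in> \<real>"
    proof (intro allI impI)
      fix w :: complex assume "poly (map_poly complex_of_real Q) w = 0"
      then have "poly (map_poly complex_of_real P) w = 0" unfolding Q map_of_real_mult by simp
      then show "w \<in> \<real>" using Suc.prems by blast
    qed
    obtain rs where rs: "Q = PP rs" "length rs = degree Q" using Suc.IH[OF dQ lQ rQ] by blast
    show ?case using Q rs dQ Suc.prems(1) by (intro exI[of _ "x # rs"]) (simp add: PP_Cons del: mult_pCons_left)
  qed
qed

lemma order_PP: "order x (PP rs) = count (mset rs) x"
proof (induction rs)
  case Nil then show ?case by (simp add: PP_def order_0I)
next
  case (Cons r rs)
  have nz: "PP (r # rs) \<noteq> 0" using PP_deg[of "r # rs"] by auto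
  have "order x (PP (r # rs)) = order x [:-r,1:] + order x (PP rs)"
    unfolding PP_Cons by (rule order_mult) (use nz in \<open>simp add: PP_Cons del: mult_pCons_left\<close>)
  moreover have "order x [:-r,1:] = (if x = r then 1 else 0)"
    using order_power_n_n[of r 1] by (auto intro: order_0I)
  ultimately show ?case using Cons by simp
qed

lemma sum_count_filter:
  assumes "finite B"
  shows "(\<Sum>x\<in>B. count (mset rs) x) = length (filter (\<lambda>r. r \<in> B) rs)"
proof (induction rs)
  case Nil then show ?case by simp
next
  case (Cons r rs)
  have "(\<Sum>x\<in>B. count (mset (r # rs)) x) = (\<Sum>x\<in>B. count (mset rs) x) + (\<Sum>x\<in>B. if x = r then 1 else 0)"
    by (simp add: sum.distrib[symmetric]) (rule sum.cong, auto)
  also have "(\<Sum>x\<in>B. if x = r then 1 else (0::nat)) = (if r \<in> B then 1 else 0)"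
    using assms by (simp add: sum.delta)
  finally show ?case using Cons by simp
qed

lemma poly_PP_zero: "poly (PP rs) x = 0 \<longleftrightarrow> x \<in> set rs"
  by (induction rs) (auto simp: PP_def)

theorem corollary5p5:
  fixes K :: nat and \<gamma> :: "nat \<Rightarrow> real" and Nneg :: nat
  assumes "K > 0" and "\<gamma> 0 = 1" and "\<gamma> K \<noteq> 0"
    and "\<forall>z::complex. poly (map_poly complex_of_real (P_poly K \<gamma>)) z = 0 \<longrightarrow> z \<in> \<real>"
    and "Nneg = (\<Sum>x\<in>{x::real. x < 0 \<and> poly (P_poly K \<gamma>) x = 0}. order x (P_poly K \<gamma>))"
  shows "\<exists>n0. \<forall>n\<ge>n0.
    (even (n - K) \<longrightarrow>
       card {x::real. x < 0 \<and> poly (q_poly K \<gamma> n) x = 0} = (n - K) div 2 + Nneg \<and>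
       card {x::real. x > 0 \<and> poly (q_poly K \<gamma> n) x = 0} = (n - K) div 2 + K - Nneg) \<and>
    (odd (n - K) \<longrightarrow>
       card {x::real. x < 0 \<and> poly (q_poly K \<gamma> n) x = 0} \<ge> (n - K - 1) div 2 + Nneg \<and>
       card {x::real. x > 0 \<and> poly (q_poly K \<gamma> n) x = 0} \<ge> (n - K - 1) div 2 + K - Nneg)"
proof -
  define P where "P = P_poly K \<gamma>"
  have coeffP: "coeff P i = (if i \<le> K then \<gamma> (K - i) else 0)" for i
  proof -
    have "coeff P i = (\<Sum>j\<in>{0..K}. if K - j = i then \<gamma> j else 0)"
      by (simp add: P_def P_poly_def coeff_sum coeff_monom)
    also have "\<dots> = (\<Sum>j\<in>{0..K}. if j = K - i \<and> i \<le> K then \<gamma> j else 0)"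
      by (rule sum.cong) auto
    also have "\<dots> = (if i \<le> K then \<gamma> (K - i) else 0)"
      by (cases "i \<le> K") (simp_all add: sum.delta')
    finally show ?thesis .
  qed
  have degP: "degree P = K"
  proof (rule antisym)
    show "degree P \<le> K" by (rule degree_le) (simp add: coeffP)
    show "K \<le> degree P" by (rule le_degree) (simp add: coeffP assms(2))
  qed
  have lcP: "lead_coeff P = 1" using degP coeffP assms(2) by simp
  have "\<exists>rs. P = PP rs \<and> length rs = degree P"
    using real_factor[OF lcP] assms(4) unfolding P_def by blast
  then obtain rs where rs: "P = PP rs" "length rs = K" using degP by auto
  have nz: "\<forall>r\<in>set rs. r \<noteq> 0"
  proof
    fix r assume "r \<in> set rs"
    then have "poly P r = 0" using rs poly_PP_zero by simp
    moreover have "poly P 0 = \<gamma> K" using coeffP[of 0] by (simp add: poly_0_coeff_0)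
    ultimately show "r \<noteq> 0" using assms(3) by auto
  qed
  define neg where "neg = length (filter (\<lambda>r. r < 0) rs)"
  have Nn: "Nneg = neg"
  proof -
    have B: "{x::real. x < 0 \<and> poly P x = 0} = {x. x \<in> set rs \<and> x < 0}"
      using rs poly_PP_zero by auto
    have fB: "finite {x. x \<in> set rs \<and> x < (0::real)}" by simp
    have "Nneg = (\<Sum>x\<in>{x. x < 0 \<and> poly P x = 0}. order x P)" using assms(5) by (simp add: P_def)
    also have "\<dots> = (\<Sum>x\<in>{x. x \<in> set rs \<and> x < 0}. count (mset rs) x)"
      unfolding B by (simp add: rs(1) order_PP)
    also have "\<dots> = length (filter (\<lambda>r. r \<in> {x. x \<in> set rs \<and> x < 0}) rs)"
      by (rule sum_count_filter[OF fB])
    also have "filter (\<lambda>r. r \<in> {x. x \<in> set rs \<and> x < 0}) rs = filter (\<lambda>r. r < 0) rs"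
      by (rule filter_cong) auto
    finally show ?thesis by (simp add: neg_def)
  qed
  have negK: "neg \<le> K" unfolding neg_def using rs(2) length_filter_le by metis
  have qeq: "q_poly K \<gamma> n = stp rs (hh n)" if "K \<le> n" for n
  proof -
    have "q_poly K \<gamma> n = (\<Sum>j\<in>{0..K}. smult (\<gamma> j) (hh (n - j)))"
      unfolding q_poly_def
      by (rule sum.cong) (use that in \<open>auto simp: hermite_hat_nat[symmetric] of_nat_diff\<close>)
    also have "\<dots> = (\<Sum>i\<in>{0..K}. smult (\<gamma> (K - i)) (hh (n - (K - i))))"
      by (subst sum.atLeastAtMost_rev) simp
    also have "\<dots> = (\<Sum>i\<le>K. smult (coeff P i) ((pderiv ^^ (K - i)) (hh n)))"
      by (rule sum.cong) (use that in \<open>auto simp: atMost_atLeast0 coeffP hh_higher\<close>)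
    also have "\<dots> = stp rs (hh n)" using stp_expand[of rs "hh n"] rs by simp
    finally show ?thesis .
  qed
  obtain r rs' where rr: "rs = r # rs'" using rs(2) assms(1) by (cases rs) auto
  have r0: "r \<noteq> 0" and nz': "\<forall>x\<in>set rs'. x \<noteq> 0" using nz rr by auto
  have negrr: "neg = length (filter (\<lambda>r. r < 0) rs') + (if r < 0 then 1 else 0)"
    unfolding neg_def rr by simp
  obtain n1 where n1: "\<forall>n\<ge>n1. even (n - length rs) \<longrightarrow> poly (stp rs (hh n)) 0 \<noteq> 0 \<and>
     card {x. x < 0 \<and> poly (stp rs (hh n)) x = 0} = (n - length rs) div 2 + length (filter (\<lambda>r. r < 0) rs)"
    using main_even[OF nz] by blast
  obtain n2 where n2: "\<forall>n\<ge>n2. even (n - length rs') \<longrightarrow> poly (stp rs' (hh n)) 0 \<noteq> 0 \<and>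
     card {x. x < 0 \<and> poly (stp rs' (hh n)) x = 0} = (n - length rs') div 2 + length (filter (\<lambda>r. r < 0) rs')"
    using main_even[OF nz'] by blast
  have Lrs': "length rs' = K - 1" using rs(2) rr by auto
  show ?thesis
  proof (intro exI[of _ "max n1 n2 + K + 4"] allI impI conjI)
    fix n assume nge: "max n1 n2 + K + 4 \<le> n"
    have Kn: "K \<le> n" and nn1: "1 \<le> n" using nge by auto
    have RRq: "RR (stp rs (hh n))" "degree (stp rs (hh n)) = n" using stp_RR[OF nz nn1] by auto
    have q0: "stp rs (hh n) \<noteq> 0" using RRq by (simp add: RR_def)
    have tot: "n = card {x. x < 0 \<and> poly (stp rs (hh n)) x = 0} + card {x. 0 < x \<and> poly (stp rs (hh n)) x = 0}
        + (if poly (stp rs (hh n)) 0 = 0 then 1 else 0)"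
      using card_split3[OF q0, of 0] RRq by (simp add: RR_def)
    {
      assume ev: "even (n - K)"
      have E: "poly (stp rs (hh n)) 0 \<noteq> 0 \<and> card {x. x < 0 \<and> poly (stp rs (hh n)) x = 0} = (n - K) div 2 + neg"
        using n1 nge ev rs(2) by (auto simp: neg_def)
      have nK: "n - K = 2 * ((n - K) div 2)" using ev by simp
      show "card {x. x < 0 \<and> poly (q_poly K \<gamma> n) x = 0} = (n - K) div 2 + Nneg"
        using E qeq[OF Kn] Nn by simp
      show "card {x. x > 0 \<and> poly (q_poly K \<gamma> n) x = 0} = (n - K) div 2 + K - Nneg"
        using E tot qeq[OF Kn] Nn negK nK Kn by simp
    }
    {
      assume od: "odd (n - K)"
      define t where "t = (n - K) div 2"
      have nK: "n - K = 2 * t + 1" using od unfolding t_def by presburger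
      define f where "f = stp rs' (hh n)"
      have RRf: "RR f" "degree f = n" using stp_RR[OF nz' nn1] by (auto simp: f_def)
      have qf: "stp rs (hh n) = f - smult r (pderiv f)" unfolding rr f_def by simp
      have ev': "even (n - length rs')" using nK Lrs' Kn assms(1) by presburger
      have e1: "n - length rs' = 2 * Suc t" using nK Lrs' Kn assms(1) by simp
      define neg' where "neg' = length (filter (\<lambda>r. r < 0) rs')"
      define ir where "ir = (if r < 0 then 1 else (0::nat))"
      have negrr': "neg = neg' + ir" using negrr by (simp add: neg'_def ir_def)
      have F0: "poly f 0 \<noteq> 0 \<and> card {x. x < 0 \<and> poly f x = 0} = (n - length rs') div 2 + neg'"
        using n2 nge ev' unfolding f_def neg'_def by auto
      have F: "poly f 0 \<noteq> 0" "card {x. x < 0 \<and> poly f x = 0} = Suc t + neg'"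
        using F0 unfolding e1 by auto
      have negle': "neg' \<le> K - 1" using Lrs' length_filter_le unfolding neg'_def by metis
      have m1: "1 \<le> card {x. x < 0 \<and> poly f x = 0}" "card {x. x < 0 \<and> poly f x = 0} < n"
        using F negle' nK nge by auto
      note NG = step_nonroot[OF RRf nn1 r0 qf F(1) m1]
      have t2: "(n - K - 1) div 2 = t" using nK by simp
      define a where "a = card {x. x < 0 \<and> poly (stp rs (hh n)) x = 0}"
      define b where "b = card {x. 0 < x \<and> poly (stp rs (hh n)) x = 0}"
      have ab: "t + neg \<le> a \<and> t + K - neg \<le> b"
      proof (cases "poly (stp rs (hh n)) 0 = 0")
        case True
        have "a + 1 = Suc t + neg' + ir" using NG True F(2) unfolding a_def ir_def by simp
        moreover have "n = a + b + 1" using tot True unfolding a_def b_def by simp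
        ultimately show ?thesis using negrr' nK Kn negK by linarith
      next
        case False
        define c where "c = (if sgn (poly (stp rs (hh n)) 0) = sgn r * sgn (poly f 0) then 1 else (0::nat))"
        have "a + 1 = Suc t + neg' + ir + c" using NG False F(2) unfolding a_def ir_def c_def by simp
        moreover have "c \<le> 1" by (simp add: c_def)
        moreover have "n = a + b" using tot False unfolding a_def b_def by simp
        ultimately show ?thesis using negrr' nK Kn negK by linarith
      qed
      show "card {x. x < 0 \<and> poly (q_poly K \<gamma> n) x = 0} \<ge> (n - K - 1) div 2 + Nneg"
        using ab unfolding t2 Nn a_def qeq[OF Kn] by simp
      show "card {x. x > 0 \<and> poly (q_poly K \<gamma> n) x = 0} \<ge> (n - K - 1) div 2 + K - Nneg"
        using ab unfolding t2 Nn b_def qeq[OF Kn] by simp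
    }
  qed
qed


end
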